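(* Let $\tau$ and $\tau'$ be permutations of $F^r$ and $F^{r'}$ respectively, fixing the all-zero vectors, and let $\tau|\tau'$ be the permutation of $F^{r+r'}$ given by $(x|y)\mapsto\tau(x)|\tau'(y)$ for $x\in F^r$, $y\in F^{r'}$. Then: (1) if $SQS_\tau$ and $SQS_{\tau'}$ (of orders $2^{r+1}$ and $2^{r'+1}$) are point transitive, then $SQS_{\tau|\tau'}$ (of order $2^{r+r'+1}$) is point transitive; (2) if $S_\tau$ and $S_{\tau'}$ are coordinate transitive codes, then $S_{\tau|\tau'}$ is coordinate transitive; (3) if $\tau$ and $\tau'$ are induced by automorphisms of regular subgroups of $\mathrm{GA}(r,2)$ and $\mathrm{GA}(r',2)$ respectively, and $S_\tau$, $S_{\tau'}$ are coordinate transitive, then $S_{\tau|\tau'}$ is neighbor transitive.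
   Context: $F=\mathrm{GF}(2)$, $\mathbf 0$ the all-zero vector, $x|y$ concatenation. For $s\ge1$ and a permutation $\rho$ of $F^s$ fixing $\mathbf 0$: index coordinates of $F^{2^s}$ by $F^s$, let $e_a$ be the unit vector at $a$, $\mathcal H=\{x\in F^{2^s}:\sum_{a:x_a=1}a=\mathbf 0,\ \mathrm{wt}(x)\text{ even}\}$, $C\times D=\{x|y:x\in C,y\in D\}$, and $S_\rho=\bigcup_{a\in F^s}(\mathcal H+e_a+e_{\mathbf 0})\times(\mathcal H+e_{\rho(a)}+e_{\rho(\mathbf 0)})\subseteq F^{2^{s+1}}$. Its positions are denoted $(\{a\},\emptyset)$ (first half) and $(\emptyset,\{a\})$ (second half), $(X,Y)$ denotes $\{(\{x\},\emptyset):x\in X\}\cup\{(\emptyset,\{y\}):y\in Y\}$, and $SQS_\rho$ is the Steiner quadruple system of quadruples $\{(\{a,b,c,d\},\emptyset)\}$ and $\{(\emptyset,\{a,b,c,d\})\}$ with $a,b,c,d$ pairwise distinct and $a+b+c+d=\mathbf 0$, together with $\{(\{a,c\},\{b,d\}):\rho(a+c)=b+d\ne\mathbf 0\}$. An SQS is point transitive if its automorphism group is transitive on points. $\mathrm{PAut}(C)=\{\pi:\pi(C)=C\}$ (coordinate permutations, $\pi(y)_i=y_{\pi^{-1}(i)}$); $C$ is coordinate transitive if $\mathrm{PAut}(C)$ is transitive on coordinates. $\mathrm{Aut}(C)$ is the stabilizer of $C$ in the group of maps $y\mapsto x+\pi(y)$; $C$ is neighbor transitive if $\mathrm{Aut}(C)$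 is transitive on $C$ and on the words at distance exactly $1$ from $C$. $\mathrm{GA}(s,2)$ is the group of affine maps $b\mapsto a+Mb$ of $F^s$; a subgroup $G$ is regular if it acts regularly on $F^s$; with $g_a\in G$ the unique element mapping $\mathbf 0$ to $a$, an automorphism $T$ of $G$ induces the permutation $\rho$ of $F^s$ with $T(g_a)=g_{\rho(a)}$. *)

theory Defs
  imports "HOL-Algebra.Group" "HOL-Library.FuncSet"
begin

section \<open>Vectors of F^s, F = GF(2), as boolean lists of length s\<close>

definition vecs :: "nat \<Rightarrow> bool list set" where
  "vecs s = {x. length x = s}"

definition zero :: "nat \<Rightarrow> bool list" where
  "zero s = replicate s False"

definition vadd :: "bool list \<Rightarrow> bool list \<Rightarrow> bool list" where
  "vadd x y = map2 (\<noteq>) x y"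

definition vsum :: "nat \<Rightarrow> bool list set \<Rightarrow> bool list" where
  "vsum s X = map (\<lambda>i. odd (card {x\<in>X. x ! i})) [0..<s]"

text \<open>Binary words of length 2^s, coordinates indexed by F^s, are identified with their supports.\<close>
definition symd :: "'a set \<Rightarrow> 'a set \<Rightarrow> 'a set" where
  "symd A B = (A - B) \<union> (B - A)"

definition Hcode :: "nat \<Rightarrow> bool list set set" where
  "Hcode s = {X. X \<subseteq> vecs s \<and> vsum s X = zero s \<and> even (card X)}"

text \<open>Positions of F^{2^{s+1}}: Inl a = ({a},\<emptyset>) (first half), Inr a = (\<emptyset>,{a}) (second half).\<close>
definition positions :: "nat \<Rightarrow> (bool list + bool list) set" where
  "positions s = Inl ` vecs s \<union> Inr ` vecs s"

definition Scode :: "nat \<Rightarrow> (bool list \<Rightarrow> bool list) \<Rightarrow> (bool list + bool list) set set" where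
  "Scode s \<rho> = {Inl ` X \<union> Inr ` Y | X Y a. a \<in> vecs s \<and>
       symd (symd X {a}) {zero s} \<in> Hcode s \<and>
       symd (symd Y {\<rho> a}) {\<rho> (zero s)} \<in> Hcode s}"

definition SQS_blocks :: "nat \<Rightarrow> (bool list \<Rightarrow> bool list) \<Rightarrow> (bool list + bool list) set set" where
  "SQS_blocks s \<rho> =
     {Inl ` {a,b,c,d} | a b c d. a \<in> vecs s \<and> b \<in> vecs s \<and> c \<in> vecs s \<and> d \<in> vecs s \<and>
        distinct [a,b,c,d] \<and> vadd (vadd a b) (vadd c d) = zero s}
   \<union> {Inr ` {a,b,c,d} | a b c d. a \<in> vecs s \<and> b \<in> vecs s \<and> c \<in> vecs s \<and> d \<in> vecs s \<and>
        distinct [a,b,c,d] \<and> vadd (vadd a b) (vadd c d) = zero s}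
   \<union> {{Inl a, Inl c, Inr b, Inr d} | a b c d. a \<in> vecs s \<and> b \<in> vecs s \<and> c \<in> vecs s \<and> d \<in> vecs s \<and>
        \<rho> (vadd a c) = vadd b d \<and> vadd b d \<noteq> zero s}"

definition point_transitive :: "'p set \<Rightarrow> 'p set set \<Rightarrow> bool" where
  "point_transitive P B \<longleftrightarrow> (\<forall>p\<in>P. \<forall>q\<in>P. \<exists>\<sigma>. bij_betw \<sigma> P P \<and> (\<lambda>b. \<sigma> ` b) ` B = B \<and> \<sigma> p = q)"

text \<open>Codes C with coordinate set N; words are subsets of N (supports).
  A coordinate permutation acts on a word y by y \<mapsto> \<pi> ` y.\<close>
definition coord_transitive :: "'p set \<Rightarrow> 'p set set \<Rightarrow> bool" where
  "coord_transitive N C \<longleftrightarrow> (\<forall>i\<in>N. \<forall>j\<in>N. \<exists>\<pi>. bij_betw \<pi> N N \<and> (\<lambda>y. \<pi> ` y) ` C = C \<and> \<pi> i = j)"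

definition is_aut :: "'p set \<Rightarrow> 'p set set \<Rightarrow> 'p set \<Rightarrow> ('p \<Rightarrow> 'p) \<Rightarrow> bool" where
  "is_aut N C x \<pi> \<longleftrightarrow> x \<subseteq> N \<and> bij_betw \<pi> N N \<and> (\<lambda>y. symd x (\<pi> ` y)) ` C = C"

definition neighbors :: "'p set \<Rightarrow> 'p set set \<Rightarrow> 'p set set" where
  "neighbors N C = {y. y \<subseteq> N \<and> y \<notin> C \<and> (\<exists>c\<in>C. card (symd y c) = 1)}"

definition neighbor_transitive :: "'p set \<Rightarrow> 'p set set \<Rightarrow> bool" where
  "neighbor_transitive N C \<longleftrightarrow>
     (\<forall>c\<in>C. \<forall>c'\<in>C. \<exists>x \<pi>. is_aut N C x \<pi> \<and> symd x (\<pi> ` c) = c') \<and>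
     (\<forall>y\<in>neighbors N C. \<forall>y'\<in>neighbors N C. \<exists>x \<pi>. is_aut N C x \<pi> \<and> symd x (\<pi> ` y) = y')"

definition matvec :: "nat \<Rightarrow> (nat \<Rightarrow> nat \<Rightarrow> bool) \<Rightarrow> bool list \<Rightarrow> bool list" where
  "matvec s M b = map (\<lambda>i. odd (card {j. j < s \<and> M i j \<and> b ! j})) [0..<s]"

definition GA :: "nat \<Rightarrow> (bool list \<Rightarrow> bool list) set" where
  "GA s = {restrict (\<lambda>b. vadd a (matvec s M b)) (vecs s) | a M.
             a \<in> vecs s \<and> bij_betw (matvec s M) (vecs s) (vecs s)}"

definition GAgrp :: "nat \<Rightarrow> (bool list \<Rightarrow> bool list) monoid" where
  "GAgrp s = \<lparr>carrier = GA s, monoid.mult = compose (vecs s), one = restrict id (vecs s)\<rparr>"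

definition regular_subgroup :: "nat \<Rightarrow> (bool list \<Rightarrow> bool list) set \<Rightarrow> bool" where
  "regular_subgroup s G \<longleftrightarrow> subgroup G (GAgrp s) \<and>
     (\<forall>a\<in>vecs s. \<forall>b\<in>vecs s. \<exists>!g. g \<in> G \<and> g a = b)"

definition g_elt :: "nat \<Rightarrow> (bool list \<Rightarrow> bool list) set \<Rightarrow> bool list \<Rightarrow> (bool list \<Rightarrow> bool list)" where
  "g_elt s G a = (THE g. g \<in> G \<and> g (zero s) = a)"

definition induced_by_reg_aut :: "nat \<Rightarrow> (bool list \<Rightarrow> bool list) \<Rightarrow> bool" where
  "induced_by_reg_aut s \<rho> \<longleftrightarrow> (\<exists>G T. regular_subgroup s G \<and>
      T \<in> iso (GAgrp s\<lparr>carrier := G\<rparr>) (GAgrp s\<lparr>carrier := G\<rparr>) \<and>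
      (\<forall>a\<in>vecs s. T (g_elt s G a) = g_elt s G (\<rho> a)))"

definition perm_fix0 :: "nat \<Rightarrow> (bool list \<Rightarrow> bool list) \<Rightarrow> bool" where
  "perm_fix0 s \<rho> \<longleftrightarrow> bij_betw \<rho> (vecs s) (vecs s) \<and> \<rho> (zero s) = zero s"

definition cat_perm :: "nat \<Rightarrow> (bool list \<Rightarrow> bool list) \<Rightarrow> (bool list \<Rightarrow> bool list) \<Rightarrow> bool list \<Rightarrow> bool list" where
  "cat_perm r \<tau> \<tau>' z = \<tau> (take r z) @ \<tau>' (drop r z)"

end

theory Submission
  imports Defs
begin

lemma in_vecs[simp]: "x \<in> vecs s \<longleftrightarrow> length x = s" by (simp add: vecs_def)
lemma vecs_finite[simp]: "finite (vecs s)"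
  unfolding vecs_def using finite_lists_length_eq[of "UNIV::bool set" s] by simp
lemma finite_subset_vecs: "X \<subseteq> vecs s \<Longrightarrow> finite X"
  using finite_subset vecs_finite by blast
lemma zero_len[simp]: "length (zero s) = s" by (simp add: zero_def)
lemma zero_nth[simp]: "i < s \<Longrightarrow> zero s ! i = False" by (simp add: zero_def)
lemma vadd_len[simp]: "length (vadd x y) = min (length x) (length y)" by (simp add: vadd_def)
lemma vadd_nth[simp]: "i < length x \<Longrightarrow> i < length y \<Longrightarrow> vadd x y ! i = (x!i \<noteq> y!i)"
  by (simp add: vadd_def)
lemma vsum_len[simp]: "length (vsum s X) = s" by (simp add: vsum_def)
lemma vsum_nth[simp]: "i < s \<Longrightarrow> vsum s X ! i = odd (card {x\<in>X. x ! i})" by (simp add: vsum_def)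

lemma vadd_comm: "vadd x y = vadd y x"
  by (rule nth_equalityI) auto
lemma vadd_assoc: "vadd (vadd x y) z = vadd x (vadd y z)"
  by (rule nth_equalityI) auto
lemma vadd_zero[simp]: "length x = s \<Longrightarrow> vadd x (zero s) = x"
  by (rule nth_equalityI) auto
lemma zero_vadd[simp]: "length x = s \<Longrightarrow> vadd (zero s) x = x"
  by (rule nth_equalityI) auto
lemma vadd_self[simp]: "length x = s \<Longrightarrow> vadd x x = zero s"
  by (rule nth_equalityI) auto
lemma vadd_cancel_left[simp]: "length x = length y \<Longrightarrow> vadd x (vadd x y) = y"
  by (rule nth_equalityI) auto
lemma vadd_eq_zero_iff: "length x = length y \<Longrightarrow> vadd x y = zero (length x) \<longleftrightarrow> x = y"
proof
  assume a: "length x = length y" "vadd x y = zero (length x)"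
  have "y = vadd x (vadd x y)" by (rule vadd_cancel_left[symmetric]) (rule a(1))
  also have "\<dots> = x" using a by simp
  finally show "x = y" by simp
qed simp

lemma odd_card_symd:
  assumes "finite A" "finite B"
  shows "odd (card (symd A B)) = (odd (card A) \<noteq> odd (card B))"
proof -
  have 1: "card A = card (A - B) + card (A \<inter> B)"
  proof -
    have e: "A = (A - B) \<union> (A \<inter> B)" by blast
    have "(A - B) \<inter> (A \<inter> B) = {}" by blast
    then show ?thesis using assms card_Un_disjoint[of "A-B" "A \<inter> B"] e by simp
  qed
  have 2: "card B = card (B - A) + card (A \<inter> B)"
  proof -
    have e: "B = (B - A) \<union> (A \<inter> B)" by blast
    have "(B - A) \<inter> (A \<inter> B) = {}" by blast
    then show ?thesis using assms card_Un_disjoint[of "B-A" "A \<inter> B"] e by simp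
  qed
  have 3: "card (symd A B) = card (A - B) + card (B - A)"
  proof -
    have "(A - B) \<inter> (B - A) = {}" by blast
    then show ?thesis unfolding symd_def using assms card_Un_disjoint[of "A-B" "B-A"] by simp
  qed
  show ?thesis using 1 2 3 by auto
qed

lemma symd_filter: "{x \<in> symd A B. P x} = symd {x\<in>A. P x} {x\<in>B. P x}"
  by (auto simp: symd_def)

lemma vsum_symd:
  assumes "finite A" "finite B"
  shows "vsum s (symd A B) = vadd (vsum s A) (vsum s B)"
proof (rule nth_equalityI)
  fix i assume "i < length (vsum s (symd A B))"
  then have i: "i < s" by simp
  show "vsum s (symd A B) ! i = vadd (vsum s A) (vsum s B) ! i"
    using i assms by (simp add: symd_filter odd_card_symd)
qed simp

lemma vsum_empty[simp]: "vsum s {} = zero s"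
  by (rule nth_equalityI) auto

lemma vsum_insert:
  assumes "finite X" "x \<notin> X" "length x = s"
  shows "vsum s (insert x X) = vadd x (vsum s X)"
proof (rule nth_equalityI)
  fix i assume "i < length (vsum s (insert x X))"
  then have i: "i < s" by simp
  have "{y \<in> insert x X. y ! i} = (if x ! i then insert x {y\<in>X. y!i} else {y\<in>X. y!i})" by auto
  then show "vsum s (insert x X) ! i = vadd x (vsum s X) ! i"
    using i assms by auto
qed (use assms in simp)

lemma vsum_single[simp]: "length a = s \<Longrightarrow> vsum s {a} = a"
  using vsum_insert[of "{}" a s] by simp

lemma vsum_pair: "length a = s \<Longrightarrow> length b = s \<Longrightarrow> a \<noteq> b \<Longrightarrow> vsum s {a,b} = vadd a b"
  using vsum_insert[of "{b}" a s] by simp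

lemma vsum_union:
  assumes "finite A" "finite B" "A \<inter> B = {}"
  shows "vsum s (A \<union> B) = vadd (vsum s A) (vsum s B)"
proof -
  have "A \<union> B = symd A B" using assms(3) by (auto simp: symd_def)
  then show ?thesis using vsum_symd assms by simp
qed

lemma card4: "card A = 4 \<Longrightarrow> \<exists>a b c d. A = {a,b,c,d} \<and> distinct [a,b,c,d]"
proof -
  assume "card A = 4"
  then have "card A = Suc (Suc (Suc (Suc 0)))" by simp
  then obtain a B where 1: "A = insert a B" "a \<notin> B" "card B = Suc (Suc (Suc 0))" by (metis card_eq_SucD)
  then obtain b C where 2: "B = insert b C" "b \<notin> C" "card C = Suc (Suc 0)" by (metis card_eq_SucD)
  then obtain c D where 3: "C = insert c D" "c \<notin> D" "card D = Suc 0" by (metis card_eq_SucD)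
  then obtain d where 4: "D = {d}" by (metis card_1_singletonE One_nat_def)
  show ?thesis using 1 2 3 4 by (intro exI[of _ a] exI[of _ b] exI[of _ c] exI[of _ d]) simp
qed

lemma card2: "card A = 2 \<Longrightarrow> \<exists>a b. A = {a,b} \<and> a \<noteq> b"
  by (simp add: card_2_iff)

definition aff :: "nat \<Rightarrow> (bool list \<Rightarrow> bool list) \<Rightarrow> bool" where
  "aff s g \<longleftrightarrow> bij_betw g (vecs s) (vecs s) \<and>
     (\<forall>x\<in>vecs s. \<forall>y\<in>vecs s. \<forall>z\<in>vecs s. g (vadd (vadd x y) z) = vadd (vadd (g x) (g y)) (g z))"

definition lin :: "nat \<Rightarrow> (bool list \<Rightarrow> bool list) \<Rightarrow> bool" where
  "lin s M \<longleftrightarrow> bij_betw M (vecs s) (vecs s) \<and>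
     (\<forall>x\<in>vecs s. \<forall>y\<in>vecs s. M (vadd x y) = vadd (M x) (M y))"

definition lin0 :: "nat \<Rightarrow> (bool list \<Rightarrow> bool list) \<Rightarrow> bool list \<Rightarrow> bool list" where
  "lin0 s g z = vadd (g z) (g (zero s))"

lemma bij_vecs_len: "bij_betw g (vecs s) (vecs s) \<Longrightarrow> length x = s \<Longrightarrow> length (g x) = s"
  using bij_betwE by fastforce

lemma aff_len: "aff s g \<Longrightarrow> length x = s \<Longrightarrow> length (g x) = s"
  unfolding aff_def using bij_vecs_len by blast

lemma lin_len: "lin s g \<Longrightarrow> length x = s \<Longrightarrow> length (g x) = s"
  unfolding lin_def using bij_vecs_len by blast

lemma aff_eq: "aff s g \<Longrightarrow> length x = s \<Longrightarrow> length y = s \<Longrightarrow> length z = s \<Longrightarrow>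
   g (vadd (vadd x y) z) = vadd (vadd (g x) (g y)) (g z)"
  unfolding aff_def by simp

lemma lin_eq: "lin s g \<Longrightarrow> length x = s \<Longrightarrow> length y = s \<Longrightarrow> g (vadd x y) = vadd (g x) (g y)"
  unfolding lin_def by simp

lemma lin_zero: assumes "lin s M" shows "M (zero s) = zero s"
proof -
  have "M (zero s) = M (vadd (zero s) (zero s))" by simp
  also have "\<dots> = vadd (M (zero s)) (M (zero s))" by (rule lin_eq[OF assms]) simp_all
  also have "\<dots> = zero s" using lin_len[OF assms, of "zero s"] by simp
  finally show ?thesis .
qed

lemma lin0_len: "aff s g \<Longrightarrow> length x = s \<Longrightarrow> length (lin0 s g x) = s"
  unfolding lin0_def using aff_len by simp

lemma lin0_add: assumes "aff s g" "length x = s" "length y = s"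
  shows "lin0 s g (vadd x y) = vadd (lin0 s g x) (lin0 s g y)"
proof -
  have "g (vadd x y) = g (vadd (vadd x y) (zero s))" using assms by simp
  also have "\<dots> = vadd (vadd (g x) (g y)) (g (zero s))" using aff_eq[OF assms(1) assms(2) assms(3) zero_len] .
  finally have e: "g (vadd x y) = vadd (vadd (g x) (g y)) (g (zero s))" .
  show ?thesis unfolding lin0_def e
    using aff_len[OF assms(1)] assms
    by (intro nth_equalityI) auto
qed

lemma lin0_zero: "aff s g \<Longrightarrow> lin0 s g (zero s) = zero s"
  unfolding lin0_def using aff_len by simp

lemma bij_vadd_const: assumes "length c = s" shows "bij_betw (\<lambda>z. vadd z c) (vecs s) (vecs s)"
proof (rule bij_betw_byWitness[where f'="\<lambda>z. vadd z c"])
  show "\<forall>a\<in>vecs s. vadd (vadd a c) c = a" using assms by (simp add: vadd_assoc)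
  show "\<forall>a\<in>vecs s. vadd (vadd a c) c = a" using assms by (simp add: vadd_assoc)
qed (use assms in auto)

lemma lin0_lin: assumes "aff s g" shows "lin s (lin0 s g)"
proof -
  have "bij_betw (\<lambda>z. vadd (g z) (g (zero s))) (vecs s) (vecs s)"
    using bij_betw_trans[OF conjunct1[OF assms[unfolded aff_def]] bij_vadd_const[of "g (zero s)" s]]
      aff_len[OF assms] by (simp add: comp_def)
  moreover have "lin0 s g = (\<lambda>z. vadd (g z) (g (zero s)))" by (rule ext) (simp add: lin0_def)
  ultimately show ?thesis unfolding lin_def using lin0_add[OF assms] by simp
qed

lemma lin_aff_shift: assumes "lin s M" "length c = s"
  shows "aff s (\<lambda>z. vadd (M z) c)" and "\<And>z. length z = s \<Longrightarrow> lin0 s (\<lambda>z. vadd (M z) c) z = M z"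
proof -
  have b: "bij_betw (\<lambda>z. vadd (M z) c) (vecs s) (vecs s)"
    using bij_betw_trans[OF conjunct1[OF assms(1)[unfolded lin_def]] bij_vadd_const[OF assms(2)]]
    by (simp add: comp_def)
  have "vadd (M (vadd (vadd x y) z)) c = vadd (vadd (vadd (M x) c) (vadd (M y) c)) (vadd (M z) c)"
    if "length x = s" "length y = s" "length z = s" for x y z
  proof -
    have e: "M (vadd (vadd x y) z) = vadd (vadd (M x) (M y)) (M z)"
      using lin_eq[OF assms(1)] that by simp
    have l: "length (M x) = s" "length (M y) = s" "length (M z) = s"
      using lin_len[OF assms(1)] that by auto
    show ?thesis unfolding e using l assms(2) by (intro nth_equalityI) auto
  qed
  then show "aff s (\<lambda>z. vadd (M z) c)"
    unfolding aff_def using b by simp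
  show "\<And>z. length z = s \<Longrightarrow> lin0 s (\<lambda>z. vadd (M z) c) z = M z"
  proof -
    fix z :: "bool list" assume z: "length z = s"
    have l: "length (M z) = s" using lin_len[OF assms(1) z] .
    show "lin0 s (\<lambda>z. vadd (M z) c) z = M z"
      unfolding lin0_def lin_zero[OF assms(1)] using l assms(2)
      by (intro nth_equalityI) auto
  qed
qed

lemma lin_id: "lin s (\<lambda>z. z)"
  unfolding lin_def by (simp add: bij_betw_def)

lemma vsum_aff_image:
  assumes "aff s g" "X \<subseteq> vecs s"
  shows "vsum s (g ` X) = vadd (lin0 s g (vsum s X)) (if even (card X) then zero s else g (zero s))"
proof -
  have fin: "finite X" using assms(2) finite_subset_vecs by blast
  have inj: "inj_on g (vecs s)" using assms(1) unfolding aff_def bij_betw_def by blast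
  show ?thesis using fin assms(2)
  proof (induction X rule: finite_induct)
    case empty
    then show ?case using lin0_zero[OF assms(1)] by simp
  next
    case (insert x F)
    have lx: "length x = s" using insert by auto
    have F: "F \<subseteq> vecs s" using insert by auto
    have gx: "g x \<notin> g ` F" using inj insert by (metis F inj_on_image_mem_iff insert_subset)
    have "vsum s (g ` insert x F) = vadd (g x) (vsum s (g ` F))"
      using vsum_insert[of "g ` F" "g x" s] gx insert aff_len[OF assms(1) lx] by simp
    also have "\<dots> = vadd (g x) (vadd (lin0 s g (vsum s F)) (if even (card F) then zero s else g (zero s)))"
      using insert F by simp
    also have "\<dots> = vadd (lin0 s g (vsum s (insert x F))) (if even (card (insert x F)) then zero s else g (zero s))"
    proof -
      have e1: "vsum s (insert x F) = vadd x (vsum s F)" using vsum_insert insert lx by blast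
      have e2: "lin0 s g (vadd x (vsum s F)) = vadd (lin0 s g x) (lin0 s g (vsum s F))"
        using lin0_add[OF assms(1) lx] by simp
      have c: "card (insert x F) = Suc (card F)" using insert by simp
      have l1: "length (g x) = s" "length (g (zero s)) = s" "length (lin0 s g (vsum s F)) = s"
        using aff_len[OF assms(1)] lx lin0_len[OF assms(1)] by auto
      have l2: "length (g (vsum s F)) = s" using aff_len[OF assms(1)] by simp
      show ?thesis
      proof (cases "even (card F)")
        case True
        then show ?thesis unfolding e1 e2 c using l1 lx
          by (intro nth_equalityI; simp add: lin0_def l2; blast)
      next
        case False
        then show ?thesis unfolding e1 e2 c using l1 lx
          by (intro nth_equalityI; simp add: lin0_def l2; blast)
      qed
    qed
    finally show ?case .
  qed
qed

lemma vsum_aff_image_even: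
  assumes "aff s g" "X \<subseteq> vecs s" "even (card X)"
  shows "vsum s (g ` X) = lin0 s g (vsum s X)"
  using vsum_aff_image[OF assms(1,2)] assms(3) lin0_len[OF assms(1)] by simp

definition Lp :: "('a + 'b) set \<Rightarrow> 'a set" where "Lp W = {a. Inl a \<in> W}"
definition Rp :: "('a + 'b) set \<Rightarrow> 'b set" where "Rp W = {b. Inr b \<in> W}"

definition Code :: "nat \<Rightarrow> (bool list \<Rightarrow> bool list) \<Rightarrow> (bool list + bool list) set set" where
  "Code s \<rho> = {W. W \<subseteq> positions s \<and> even (card (Lp W)) \<and> even (card (Rp W)) \<and>
                   vsum s (Rp W) = \<rho> (vsum s (Lp W))}"

lemma Lp_union[simp]: "Lp (A \<union> B) = Lp A \<union> Lp B" by (auto simp: Lp_def)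
lemma Rp_union[simp]: "Rp (A \<union> B) = Rp A \<union> Rp B" by (auto simp: Rp_def)
lemma Lp_Inl[simp]: "Lp (Inl ` X) = X" by (auto simp: Lp_def)
lemma Lp_Inr[simp]: "Lp (Inr ` X) = {}" by (auto simp: Lp_def)
lemma Rp_Inl[simp]: "Rp (Inl ` X) = {}" by (auto simp: Rp_def)
lemma Rp_Inr[simp]: "Rp (Inr ` X) = X" by (auto simp: Rp_def)
lemma Lp_empty[simp]: "Lp {} = {}" by (auto simp: Lp_def)
lemma Rp_empty[simp]: "Rp {} = {}" by (auto simp: Rp_def)
lemma Lp_insert_Inl[simp]: "Lp (insert (Inl a) W) = insert a (Lp W)" by (auto simp: Lp_def)
lemma Lp_insert_Inr[simp]: "Lp (insert (Inr a) W) = Lp W" by (auto simp: Lp_def)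
lemma Rp_insert_Inl[simp]: "Rp (insert (Inl a) W) = Rp W" by (auto simp: Rp_def)
lemma Rp_insert_Inr[simp]: "Rp (insert (Inr a) W) = insert a (Rp W)" by (auto simp: Rp_def)
lemma Lp_symd[simp]: "Lp (symd A B) = symd (Lp A) (Lp B)" by (auto simp: Lp_def symd_def)
lemma Rp_symd[simp]: "Rp (symd A B) = symd (Rp A) (Rp B)" by (auto simp: Rp_def symd_def)
lemma Lp_mem[simp]: "a \<in> Lp W \<longleftrightarrow> Inl a \<in> W" by (simp add: Lp_def)
lemma Rp_mem[simp]: "a \<in> Rp W \<longleftrightarrow> Inr a \<in> W" by (simp add: Rp_def)

lemma Inl_pos[simp]: "Inl a \<in> positions s \<longleftrightarrow> length a = s" by (auto simp: positions_def)
lemma Inr_pos[simp]: "Inr a \<in> positions s \<longleftrightarrow> length a = s" by (auto simp: positions_def)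
lemma finite_positions[simp]: "finite (positions s)" by (simp add: positions_def)

lemma pos_decomp: "W \<subseteq> positions s \<Longrightarrow> W = Inl ` Lp W \<union> Inr ` Rp W"
proof (intro equalityI subsetI)
  fix x assume "x \<in> W" then show "x \<in> Inl ` Lp W \<union> Inr ` Rp W" by (cases x) auto
qed auto

lemma pos_Lp: assumes "W \<subseteq> positions s" shows "Lp W \<subseteq> vecs s"
proof
  fix a assume "a \<in> Lp W" then have "Inl a \<in> positions s" using assms by auto
  then show "a \<in> vecs s" by simp
qed
lemma pos_Rp: assumes "W \<subseteq> positions s" shows "Rp W \<subseteq> vecs s"
proof
  fix a assume "a \<in> Rp W" then have "Inr a \<in> positions s" using assms by auto
  then show "a \<in> vecs s" by simp
qed
lemma fin_Lp: "W \<subseteq> positions s \<Longrightarrow> finite (Lp W)"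
  by (rule finite_subset_vecs[OF pos_Lp])
lemma fin_Rp: "W \<subseteq> positions s \<Longrightarrow> finite (Rp W)"
  by (rule finite_subset_vecs[OF pos_Rp])

lemma card_LR:
  fixes X :: "'a set" and Y :: "'b set"
  assumes f: "finite X" "finite Y"
  shows "card (Inl ` X \<union> Inr ` Y) = card X + card Y"
proof -
  have d: "(Inl ` X :: ('a + 'b) set) \<inter> Inr ` Y = {}" by auto
  have "card (Inl ` X \<union> Inr ` Y) = card (Inl ` X :: ('a + 'b) set) + card (Inr ` Y :: ('a + 'b) set)"
    using card_Un_disjoint[of "Inl ` X :: ('a + 'b) set" "Inr ` Y"] f d by simp
  also have "\<dots> = card X + card Y" by (simp add: card_image)
  finally show ?thesis .
qed

lemma card_pos: assumes "W \<subseteq> positions s" shows "card W = card (Lp W) + card (Rp W)"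
proof -
  have "card W = card (Inl ` Lp W \<union> Inr ` Rp W)" using pos_decomp[OF assms] by simp
  also have "\<dots> = card (Lp W) + card (Rp W)" by (rule card_LR[OF fin_Lp[OF assms] fin_Rp[OF assms]])
  finally show ?thesis .
qed

lemma even_symd_single: "finite X \<Longrightarrow> even (card (symd X {a})) \<longleftrightarrow> odd (card X)"
proof -
  assume f: "finite X"
  have "odd (card (symd X {a})) = even (card X)" using odd_card_symd[OF f, of "{a}"] by simp
  then show ?thesis by blast
qed

lemma finite_symd[simp]: "finite A \<Longrightarrow> finite B \<Longrightarrow> finite (symd A B)"
  by (simp add: symd_def)

lemma symd_symd_sub:
  assumes "symd (symd X {a}) {b} \<subseteq> vecs s" "a \<in> vecs s" "b \<in> vecs s"
  shows "X \<subseteq> vecs s"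
  using assms unfolding symd_def by blast

lemma hcode_char:
  assumes "X \<subseteq> vecs s" "length a = s" "length b = s"
  shows "symd (symd X {a}) {b} \<in> Hcode s \<longleftrightarrow> even (card X) \<and> vsum s X = vadd a b"
proof -
  have fX: "finite X" using assms finite_subset_vecs by blast
  have sub: "symd (symd X {a}) {b} \<subseteq> vecs s" using assms unfolding symd_def by auto
  have f1: "finite (symd X {a})" using fX by simp
  have c: "even (card (symd (symd X {a}) {b})) \<longleftrightarrow> even (card X)"
    using even_symd_single[OF f1, of b] even_symd_single[OF fX, of a] by blast
  have v: "vsum s (symd (symd X {a}) {b}) = vadd (vadd (vsum s X) a) b"
    using vsum_symd[OF f1, of "{b}" s] vsum_symd[OF fX, of "{a}" s] assms
    by simp
  have "vadd (vadd (vsum s X) a) b = zero s \<longleftrightarrow> vsum s X = vadd a b"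
  proof -
    have "vadd (vadd (vsum s X) a) b = vadd (vsum s X) (vadd a b)" by (simp add: vadd_assoc)
    then show ?thesis using vadd_eq_zero_iff[of "vsum s X" "vadd a b"] assms by simp
  qed
  then show ?thesis unfolding Hcode_def using sub c v by auto
qed

lemma Scode_eq:
  assumes z: "\<rho> (zero s) = zero s" and m: "\<forall>a\<in>vecs s. \<rho> a \<in> vecs s"
  shows "Scode s \<rho> = Code s \<rho>"
proof
  show "Scode s \<rho> \<subseteq> Code s \<rho>"
  proof
    fix W assume "W \<in> Scode s \<rho>"
    then obtain X Y a where W: "W = Inl ` X \<union> Inr ` Y" and a: "a \<in> vecs s"
      and hX: "symd (symd X {a}) {zero s} \<in> Hcode s"
      and hY: "symd (symd Y {\<rho> a}) {\<rho> (zero s)} \<in> Hcode s"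
      unfolding Scode_def by blast
    have ra: "\<rho> a \<in> vecs s" using m a by blast
    have X: "X \<subseteq> vecs s"
      using symd_symd_sub[of X a "zero s" s] hX a unfolding Hcode_def by auto
    have Y: "Y \<subseteq> vecs s"
      using symd_symd_sub[of Y "\<rho> a" "zero s" s] hY ra z unfolding Hcode_def by auto
    have cX: "even (card X) \<and> vsum s X = a"
      using hcode_char[OF X, of a "zero s"] hX a by simp
    have cY: "even (card Y) \<and> vsum s Y = \<rho> a"
      using hcode_char[OF Y, of "\<rho> a" "zero s"] hY ra z by simp
    show "W \<in> Code s \<rho>" unfolding Code_def W using X Y cX cY
      by (auto simp: positions_def)
  qed
next
  show "Code s \<rho> \<subseteq> Scode s \<rho>"
  proof
    fix W assume W: "W \<in> Code s \<rho>"
    let ?X = "Lp W" and ?Y = "Rp W" and ?a = "vsum s (Lp W)"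
    have P: "W \<subseteq> positions s" using W unfolding Code_def by blast
    have X: "?X \<subseteq> vecs s" and Y: "?Y \<subseteq> vecs s" using pos_Lp[OF P] pos_Rp[OF P] .
    have a: "?a \<in> vecs s" by simp
    have ra: "\<rho> ?a \<in> vecs s" using m a by blast
    have h1: "symd (symd ?X {?a}) {zero s} \<in> Hcode s"
      using hcode_char[OF X, of ?a "zero s"] W unfolding Code_def by simp
    have h2: "symd (symd ?Y {\<rho> ?a}) {\<rho> (zero s)} \<in> Hcode s"
      using hcode_char[OF Y, of "\<rho> ?a" "zero s"] W ra z unfolding Code_def by simp
    show "W \<in> Scode s \<rho>" unfolding Scode_def
      using pos_decomp[OF P] a h1 h2 by blast
  qed
qed

lemma vsum4:
  assumes "distinct [a,b,c,d]" "length a = s" "length b = s" "length c = s" "length d = s"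
  shows "vsum s {a,b,c,d} = vadd (vadd a b) (vadd c d)"
proof -
  have 1: "vsum s {c,d} = vadd c d" using assms by (intro vsum_pair) auto
  have 2: "vsum s {b,c,d} = vadd b (vsum s {c,d})" using assms by (intro vsum_insert) auto
  have 3: "vsum s {a,b,c,d} = vadd a (vsum s {b,c,d})" using assms by (intro vsum_insert) auto
  have "vsum s {a,b,c,d} = vadd a (vadd b (vadd c d))"
    using 1 2 3 by simp
  then show ?thesis by (simp only: vadd_assoc)
qed

lemma pf_inj: "perm_fix0 s \<rho> \<Longrightarrow> x \<in> vecs s \<Longrightarrow> y \<in> vecs s \<Longrightarrow> \<rho> x = \<rho> y \<longleftrightarrow> x = y"
  unfolding perm_fix0_def bij_betw_def inj_on_def by blast

lemma pf_len: "perm_fix0 s \<rho> \<Longrightarrow> length x = s \<Longrightarrow> length (\<rho> x) = s"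
  unfolding perm_fix0_def using bij_vecs_len by blast

lemma pf_zero_iff: "perm_fix0 s \<rho> \<Longrightarrow> length x = s \<Longrightarrow> \<rho> x = zero s \<longleftrightarrow> x = zero s"
  using pf_inj[of s \<rho> x "zero s"] unfolding perm_fix0_def by simp

lemma even_le4: "even (n::nat) \<Longrightarrow> n \<le> 4 \<Longrightarrow> n = 0 \<or> n = 2 \<or> n = 4"
  by (cases n rule: parity_cases) auto

lemma SQS_I1: "a \<in> vecs s \<Longrightarrow> b \<in> vecs s \<Longrightarrow> c \<in> vecs s \<Longrightarrow> d \<in> vecs s \<Longrightarrow> distinct [a,b,c,d] \<Longrightarrow>
  vadd (vadd a b) (vadd c d) = zero s \<Longrightarrow> Inl ` {a,b,c,d} \<in> SQS_blocks s \<rho>"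
  unfolding SQS_blocks_def by (rule UnI1, rule UnI1, blast)
lemma SQS_I2: "a \<in> vecs s \<Longrightarrow> b \<in> vecs s \<Longrightarrow> c \<in> vecs s \<Longrightarrow> d \<in> vecs s \<Longrightarrow> distinct [a,b,c,d] \<Longrightarrow>
  vadd (vadd a b) (vadd c d) = zero s \<Longrightarrow> Inr ` {a,b,c,d} \<in> SQS_blocks s \<rho>"
  unfolding SQS_blocks_def by (rule UnI1, rule UnI2, blast)
lemma SQS_I3: "a \<in> vecs s \<Longrightarrow> b \<in> vecs s \<Longrightarrow> c \<in> vecs s \<Longrightarrow> d \<in> vecs s \<Longrightarrow>
  \<rho> (vadd a c) = vadd b d \<Longrightarrow> vadd b d \<noteq> zero s \<Longrightarrow> {Inl a, Inl c, Inr b, Inr d} \<in> SQS_blocks s \<rho>"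
  unfolding SQS_blocks_def by (rule UnI2, blast)
lemma SQS_E:
  assumes "W \<in> SQS_blocks s \<rho>"
  obtains (A) a b c d where "W = Inl ` {a,b,c,d}" "a \<in> vecs s" "b \<in> vecs s" "c \<in> vecs s" "d \<in> vecs s"
        "distinct [a,b,c,d]" "vadd (vadd a b) (vadd c d) = zero s"
    | (B) a b c d where "W = Inr ` {a,b,c,d}" "a \<in> vecs s" "b \<in> vecs s" "c \<in> vecs s" "d \<in> vecs s"
        "distinct [a,b,c,d]" "vadd (vadd a b) (vadd c d) = zero s"
    | (M) a b c d where "W = {Inl a, Inl c, Inr b, Inr d}" "a \<in> vecs s" "b \<in> vecs s" "c \<in> vecs s" "d \<in> vecs s"
        "\<rho> (vadd a c) = vadd b d" "vadd b d \<noteq> zero s"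
  using assms unfolding SQS_blocks_def
  apply (elim UnE)
  subgoal by (elim CollectE exE conjE) metis
  subgoal by (elim CollectE exE conjE) metis
  subgoal by (elim CollectE exE conjE) metis
  done

lemma SQS_eq:
  assumes pf: "perm_fix0 s \<rho>"
  shows "SQS_blocks s \<rho> = {W \<in> Code s \<rho>. card W = 4}"
proof
  have z: "\<rho> (zero s) = zero s" using pf unfolding perm_fix0_def by blast
  show "SQS_blocks s \<rho> \<subseteq> {W \<in> Code s \<rho>. card W = 4}"
  proof
    fix W assume "W \<in> SQS_blocks s \<rho>"
    then consider
      (A) a b c d where "W = Inl ` {a,b,c,d}" "a \<in> vecs s" "b \<in> vecs s" "c \<in> vecs s" "d \<in> vecs s"
        "distinct [a,b,c,d]" "vadd (vadd a b) (vadd c d) = zero s"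
    | (B) a b c d where "W = Inr ` {a,b,c,d}" "a \<in> vecs s" "b \<in> vecs s" "c \<in> vecs s" "d \<in> vecs s"
        "distinct [a,b,c,d]" "vadd (vadd a b) (vadd c d) = zero s"
    | (M) a b c d where "W = {Inl a, Inl c, Inr b, Inr d}" "a \<in> vecs s" "b \<in> vecs s" "c \<in> vecs s" "d \<in> vecs s"
        "\<rho> (vadd a c) = vadd b d" "vadd b d \<noteq> zero s"
      by (rule SQS_E)
    then show "W \<in> {W \<in> Code s \<rho>. card W = 4}"
    proof cases
      case A
      have c4: "card {a,b,c,d} = 4" using A(6) by simp
      have ci: "card (Inl ` {a,b,c,d}) = card {a,b,c,d}" by (rule card_image) (simp add: inj_on_def)
      have "card W = 4" unfolding A(1) ci c4 ..
      moreover have "vsum s {a,b,c,d} = zero s" using vsum4[of a b c d s] A by simp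
      ultimately show ?thesis using A z c4 unfolding Code_def by (auto simp: positions_def)
    next
      case B
      have c4: "card {a,b,c,d} = 4" using B(6) by simp
      have ci: "card (Inr ` {a,b,c,d}) = card {a,b,c,d}" by (rule card_image) (simp add: inj_on_def)
      have "card W = 4" unfolding B(1) ci c4 ..
      moreover have "vsum s {a,b,c,d} = zero s" using vsum4[of a b c d s] B by simp
      ultimately show ?thesis using B z c4 unfolding Code_def by (auto simp: positions_def)
    next
      case M
      have ac: "a \<noteq> c"
      proof
        assume "a = c"
        then have "vadd a c = zero s" using M by simp
        then show False using M z by simp
      qed
      have bd: "b \<noteq> d" using M by auto
      have W: "W = Inl ` {a,c} \<union> Inr ` {b,d}" using M(1) by auto
      have "card W = 4" unfolding W using ac bd by (subst card_LR) auto
      moreover have "vsum s {b,d} = \<rho> (vsum s {a,c})" using M ac bd by (simp add: vsum_pair)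
      ultimately show ?thesis using M ac bd unfolding Code_def W by (auto simp: positions_def)
    qed
  qed
next
  have z: "\<rho> (zero s) = zero s" using pf unfolding perm_fix0_def by blast
  show "{W \<in> Code s \<rho>. card W = 4} \<subseteq> SQS_blocks s \<rho>"
  proof
    fix W assume "W \<in> {W \<in> Code s \<rho>. card W = 4}"
    then have W: "W \<in> Code s \<rho>" and c4: "card W = 4" by auto
    have P: "W \<subseteq> positions s" using W unfolding Code_def by blast
    have X: "Lp W \<subseteq> vecs s" and Y: "Rp W \<subseteq> vecs s" using pos_Lp[OF P] pos_Rp[OF P] .
    have fX: "finite (Lp W)" and fY: "finite (Rp W)" using fin_Lp[OF P] fin_Rp[OF P] .
    have cs: "card (Lp W) + card (Rp W) = 4" using card_pos[OF P] c4 by simp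
    have eX: "even (card (Lp W))" and eY: "even (card (Rp W))" and sm: "vsum s (Rp W) = \<rho> (vsum s (Lp W))"
      using W unfolding Code_def by auto
    have Wd: "W = Inl ` Lp W \<union> Inr ` Rp W" using pos_decomp[OF P] .
    from even_le4[OF eX] cs consider "card (Lp W) = 0" | "card (Lp W) = 2" | "card (Lp W) = 4" by linarith
    then show "W \<in> SQS_blocks s \<rho>"
    proof cases
      case 1
      have Le: "Lp W = {}" using 1 fX by simp
      obtain a b c d where Y4: "Rp W = {a,b,c,d}" "distinct [a,b,c,d]" using card4[of "Rp W"] cs 1 by auto
      have v: "vsum s {a,b,c,d} = zero s" using sm Le z Y4 by simp
      have abcd: "a \<in> vecs s" "b \<in> vecs s" "c \<in> vecs s" "d \<in> vecs s" using Y Y4 by auto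
      have "vadd (vadd a b) (vadd c d) = zero s" using vsum4[of a b c d s] v abcd Y4 by simp
      moreover have "W = Inr ` {a,b,c,d}" using Wd Le Y4 by simp
      ultimately show ?thesis using SQS_I2[OF abcd Y4(2)] by simp
    next
      case 2
      obtain a c where X2: "Lp W = {a,c}" "a \<noteq> c" using card2[of "Lp W"] 2 by auto
      obtain b d where Y2: "Rp W = {b,d}" "b \<noteq> d" using card2[of "Rp W"] 2 cs by auto
      have abcd: "a \<in> vecs s" "b \<in> vecs s" "c \<in> vecs s" "d \<in> vecs s" using X Y X2 Y2 by auto
      have r: "\<rho> (vadd a c) = vadd b d" using sm X2 Y2 abcd by (simp add: vsum_pair)
      have nz: "vadd b d \<noteq> zero s"
        using vadd_eq_zero_iff[of b d] abcd Y2 by simp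
      have "W = {Inl a, Inl c, Inr b, Inr d}" using Wd X2 Y2 by auto
      moreover have "{Inl a, Inl c, Inr b, Inr d} \<in> SQS_blocks s \<rho>"
        using abcd r nz by (intro SQS_I3) auto
      ultimately show ?thesis by simp
    next
      case 3
      have Ye: "Rp W = {}" using 3 cs fY by simp
      obtain a b c d where X4: "Lp W = {a,b,c,d}" "distinct [a,b,c,d]" using card4[of "Lp W"] 3 by auto
      have abcd: "a \<in> vecs s" "b \<in> vecs s" "c \<in> vecs s" "d \<in> vecs s" using X X4 by auto
      have "\<rho> (vsum s {a,b,c,d}) = zero s" using sm Ye X4 by simp
      then have v: "vsum s {a,b,c,d} = zero s" using pf_zero_iff[OF pf] by simp
      have "vadd (vadd a b) (vadd c d) = zero s" using vsum4[of a b c d s] v abcd X4 by simp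
      moreover have "W = Inl ` {a,b,c,d}" using Wd Ye X4 by simp
      ultimately show ?thesis using SQS_I1[OF abcd X4(2)] by simp
    qed
  qed
qed

definition pmap :: "(bool list \<Rightarrow> bool list) \<Rightarrow> (bool list \<Rightarrow> bool list) \<Rightarrow> bool list + bool list \<Rightarrow> bool list + bool list" where
  "pmap g h z = (case z of Inl a \<Rightarrow> Inl (g a) | Inr b \<Rightarrow> Inr (h b))"
definition smap :: "(bool list \<Rightarrow> bool list) \<Rightarrow> (bool list \<Rightarrow> bool list) \<Rightarrow> bool list + bool list \<Rightarrow> bool list + bool list" where
  "smap g h z = (case z of Inl a \<Rightarrow> Inr (g a) | Inr b \<Rightarrow> Inl (h b))"

lemma pmap_simps[simp]: "pmap g h (Inl a) = Inl (g a)" "pmap g h (Inr b) = Inr (h b)"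
  by (simp_all add: pmap_def)
lemma smap_simps[simp]: "smap g h (Inl a) = Inr (g a)" "smap g h (Inr b) = Inl (h b)"
  by (simp_all add: smap_def)

lemma Lp_pmap[simp]: "Lp (pmap g h ` W) = g ` Lp W"
proof (intro equalityI subsetI)
  fix a assume "a \<in> Lp (pmap g h ` W)"
  then obtain w where "w \<in> W" "pmap g h w = Inl a" by auto
  then show "a \<in> g ` Lp W" by (cases w) auto
next
  fix a assume "a \<in> g ` Lp W"
  then obtain b where "Inl b \<in> W" "a = g b" by auto
  then have "pmap g h (Inl b) \<in> pmap g h ` W" by (intro imageI)
  then show "a \<in> Lp (pmap g h ` W)" using \<open>a = g b\<close> by simp
qed

lemma Rp_pmap[simp]: "Rp (pmap g h ` W) = h ` Rp W"
proof (intro equalityI subsetI)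
  fix a assume "a \<in> Rp (pmap g h ` W)"
  then obtain w where "w \<in> W" "pmap g h w = Inr a" by auto
  then show "a \<in> h ` Rp W" by (cases w) auto
next
  fix a assume "a \<in> h ` Rp W"
  then obtain b where "Inr b \<in> W" "a = h b" by auto
  then have "pmap g h (Inr b) \<in> pmap g h ` W" by (intro imageI)
  then show "a \<in> Rp (pmap g h ` W)" using \<open>a = h b\<close> by simp
qed

lemma Lp_smap[simp]: "Lp (smap g h ` W) = h ` Rp W"
proof (intro equalityI subsetI)
  fix a assume "a \<in> Lp (smap g h ` W)"
  then obtain w where "w \<in> W" "smap g h w = Inl a" by auto
  then show "a \<in> h ` Rp W" by (cases w) auto
next
  fix a assume "a \<in> h ` Rp W"
  then obtain b where "Inr b \<in> W" "a = h b" by auto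
  then have "smap g h (Inr b) \<in> smap g h ` W" by (intro imageI)
  then show "a \<in> Lp (smap g h ` W)" using \<open>a = h b\<close> by simp
qed

lemma Rp_smap[simp]: "Rp (smap g h ` W) = g ` Lp W"
proof (intro equalityI subsetI)
  fix a assume "a \<in> Rp (smap g h ` W)"
  then obtain w where "w \<in> W" "smap g h w = Inr a" by auto
  then show "a \<in> g ` Lp W" by (cases w) auto
next
  fix a assume "a \<in> g ` Lp W"
  then obtain b where "Inl b \<in> W" "a = g b" by auto
  then have "smap g h (Inl b) \<in> smap g h ` W" by (intro imageI)
  then show "a \<in> Rp (smap g h ` W)" using \<open>a = g b\<close> by simp
qed

lemma bij_pmap:
  assumes g: "bij_betw g (vecs s) (vecs s)" and h: "bij_betw h (vecs s) (vecs s)"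
  shows "bij_betw (pmap g h) (positions s) (positions s)"
proof (rule bij_betw_byWitness[where f'="pmap (inv_into (vecs s) g) (inv_into (vecs s) h)"])
  have ig: "bij_betw (inv_into (vecs s) g) (vecs s) (vecs s)" using bij_betw_inv_into[OF g] .
  have ih: "bij_betw (inv_into (vecs s) h) (vecs s) (vecs s)" using bij_betw_inv_into[OF h] .
  show "\<forall>z\<in>positions s. pmap (inv_into (vecs s) g) (inv_into (vecs s) h) (pmap g h z) = z"
  proof
    fix z assume "z \<in> positions s"
    then show "pmap (inv_into (vecs s) g) (inv_into (vecs s) h) (pmap g h z) = z"
      using g h by (cases z) (auto simp: bij_betw_def inv_into_f_f)
  qed
  show "\<forall>z\<in>positions s. pmap g h (pmap (inv_into (vecs s) g) (inv_into (vecs s) h) z) = z"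
  proof
    fix z assume "z \<in> positions s"
    then show "pmap g h (pmap (inv_into (vecs s) g) (inv_into (vecs s) h) z) = z"
      using g h by (cases z) (auto simp: bij_betw_def f_inv_into_f)
  qed
  show "pmap g h ` positions s \<subseteq> positions s"
  proof
    fix z assume "z \<in> pmap g h ` positions s"
    then obtain w where w: "w \<in> positions s" "z = pmap g h w" by auto
    then show "z \<in> positions s" using g h bij_vecs_len by (cases w) auto
  qed
  show "pmap (inv_into (vecs s) g) (inv_into (vecs s) h) ` positions s \<subseteq> positions s"
  proof
    fix z assume "z \<in> pmap (inv_into (vecs s) g) (inv_into (vecs s) h) ` positions s"
    then obtain w where w: "w \<in> positions s" "z = pmap (inv_into (vecs s) g) (inv_into (vecs s) h) w" by auto
    then show "z \<in> positions s" using ig ih bij_vecs_len by (cases w) auto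
  qed
qed

lemma bij_smap:
  assumes g: "bij_betw g (vecs s) (vecs s)" and h: "bij_betw h (vecs s) (vecs s)"
  shows "bij_betw (smap g h) (positions s) (positions s)"
proof (rule bij_betw_byWitness[where f'="smap (inv_into (vecs s) h) (inv_into (vecs s) g)"])
  have ig: "bij_betw (inv_into (vecs s) g) (vecs s) (vecs s)" using bij_betw_inv_into[OF g] .
  have ih: "bij_betw (inv_into (vecs s) h) (vecs s) (vecs s)" using bij_betw_inv_into[OF h] .
  show "\<forall>z\<in>positions s. smap (inv_into (vecs s) h) (inv_into (vecs s) g) (smap g h z) = z"
  proof
    fix z assume "z \<in> positions s"
    then show "smap (inv_into (vecs s) h) (inv_into (vecs s) g) (smap g h z) = z"
      using g h by (cases z) (auto simp: bij_betw_def inv_into_f_f)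
  qed
  show "\<forall>z\<in>positions s. smap g h (smap (inv_into (vecs s) h) (inv_into (vecs s) g) z) = z"
  proof
    fix z assume "z \<in> positions s"
    then show "smap g h (smap (inv_into (vecs s) h) (inv_into (vecs s) g) z) = z"
      using g h by (cases z) (auto simp: bij_betw_def f_inv_into_f)
  qed
  show "smap g h ` positions s \<subseteq> positions s"
  proof
    fix z assume "z \<in> smap g h ` positions s"
    then obtain w where w: "w \<in> positions s" "z = smap g h w" by auto
    then show "z \<in> positions s" using g h bij_vecs_len by (cases w) auto
  qed
  show "smap (inv_into (vecs s) h) (inv_into (vecs s) g) ` positions s \<subseteq> positions s"
  proof
    fix z assume "z \<in> smap (inv_into (vecs s) h) (inv_into (vecs s) g) ` positions s"
    then obtain w where w: "w \<in> positions s" "z = smap (inv_into (vecs s) h) (inv_into (vecs s) g) w" by auto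
    then show "z \<in> positions s" using ig ih bij_vecs_len by (cases w) auto
  qed
qed

lemma finite_Code: "finite (Code s \<rho>)"
proof -
  have "Code s \<rho> \<subseteq> Pow (positions s)" unfolding Code_def by auto
  then show ?thesis using finite_subset by (metis finite_Pow_iff finite_positions)
qed

lemma Code_pos: "W \<in> Code s \<rho> \<Longrightarrow> W \<subseteq> positions s"
  unfolding Code_def by blast

lemma symd_cancel[simp]: "symd x (symd x A) = A"
  unfolding symd_def by blast

lemma symd_empty[simp]: "symd {} A = A"
  unfolding symd_def by blast

lemma symd_sub: "A \<subseteq> P \<Longrightarrow> B \<subseteq> P \<Longrightarrow> symd A B \<subseteq> P"
  unfolding symd_def by blast

lemma empty_Code: "perm_fix0 s \<rho> \<Longrightarrow> {} \<in> Code s \<rho>"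
  unfolding Code_def perm_fix0_def by simp

lemma aff_inj: "aff s g \<Longrightarrow> inj_on g (vecs s)"
  unfolding aff_def bij_betw_def by blast

lemma card_aff_image: "aff s g \<Longrightarrow> X \<subseteq> vecs s \<Longrightarrow> card (g ` X) = card X"
  by (rule card_image) (meson aff_inj inj_on_subset)

lemma code_pmap:
  assumes pf: "perm_fix0 s \<rho>" and ag: "aff s g" and ah: "aff s h" and x: "x \<in> Code s \<rho>"
    and cond: "\<forall>b\<in>vecs s. \<rho> (vadd (vsum s (Lp x)) (lin0 s g b)) = vadd (vsum s (Rp x)) (lin0 s h (\<rho> b))"
  shows "(\<lambda>w. symd x (pmap g h ` w)) ` Code s \<rho> = Code s \<rho>"
proof (rule endo_inj_surj)
  show "finite (Code s \<rho>)" by (rule finite_Code)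
  have bp: "bij_betw (pmap g h) (positions s) (positions s)"
    using bij_pmap ag ah unfolding aff_def by blast
  have xP: "x \<subseteq> positions s" using Code_pos[OF x] .
  show "(\<lambda>w. symd x (pmap g h ` w)) ` Code s \<rho> \<subseteq> Code s \<rho>"
  proof
    fix y assume "y \<in> (\<lambda>w. symd x (pmap g h ` w)) ` Code s \<rho>"
    then obtain w where w: "w \<in> Code s \<rho>" and y: "y = symd x (pmap g h ` w)" by blast
    have wP: "w \<subseteq> positions s" using Code_pos[OF w] .
    have pw: "pmap g h ` w \<subseteq> positions s" using bp wP unfolding bij_betw_def by blast
    have yP: "y \<subseteq> positions s" unfolding y by (rule symd_sub[OF xP pw])
    have Lw: "Lp w \<subseteq> vecs s" and Rw: "Rp w \<subseteq> vecs s" using pos_Lp[OF wP] pos_Rp[OF wP] .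
    have Lx: "finite (Lp x)" and Rx: "finite (Rp x)" using fin_Lp[OF xP] fin_Rp[OF xP] .
    have fgw: "finite (g ` Lp w)" "finite (h ` Rp w)" using fin_Lp[OF wP] fin_Rp[OF wP] by auto
    have ew: "even (card (Lp w))" "even (card (Rp w))" and sw: "vsum s (Rp w) = \<rho> (vsum s (Lp w))"
      using w unfolding Code_def by auto
    have ex: "even (card (Lp x))" "even (card (Rp x))" and sx: "vsum s (Rp x) = \<rho> (vsum s (Lp x))"
      using x unfolding Code_def by auto
    have cL: "card (g ` Lp w) = card (Lp w)" using card_aff_image[OF ag Lw] .
    have cR: "card (h ` Rp w) = card (Rp w)" using card_aff_image[OF ah Rw] .
    have e1: "even (card (Lp y))" unfolding y Lp_symd Lp_pmap
      using odd_card_symd[OF Lx fgw(1)] ex ew cL by simp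
    have e2: "even (card (Rp y))" unfolding y Rp_symd Rp_pmap
      using odd_card_symd[OF Rx fgw(2)] ex ew cR by simp
    have v1: "vsum s (Lp y) = vadd (vsum s (Lp x)) (lin0 s g (vsum s (Lp w)))"
      unfolding y Lp_symd Lp_pmap vsum_symd[OF Lx fgw(1)] vsum_aff_image_even[OF ag Lw ew(1)] ..
    have v2: "vsum s (Rp y) = vadd (vsum s (Rp x)) (lin0 s h (vsum s (Rp w)))"
      unfolding y Rp_symd Rp_pmap vsum_symd[OF Rx fgw(2)] vsum_aff_image_even[OF ah Rw ew(2)] ..
    have "vsum s (Rp y) = \<rho> (vsum s (Lp y))"
      unfolding v1 v2 sw using cond by simp
    then show "y \<in> Code s \<rho>" unfolding Code_def using yP e1 e2 by blast
  qed
  show "inj_on (\<lambda>w. symd x (pmap g h ` w)) (Code s \<rho>)"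
  proof (rule inj_onI)
    fix w1 w2 assume w: "w1 \<in> Code s \<rho>" "w2 \<in> Code s \<rho>" and e: "symd x (pmap g h ` w1) = symd x (pmap g h ` w2)"
    have "pmap g h ` w1 = pmap g h ` w2" using arg_cong[OF e, of "symd x"] by simp
    moreover have "inj_on (pmap g h) (positions s)" using bp unfolding bij_betw_def by blast
    ultimately show "w1 = w2" using Code_pos[OF w(1)] Code_pos[OF w(2)] inj_on_image_eq_iff by metis
  qed
qed

lemma code_smap:
  assumes pf: "perm_fix0 s \<rho>" and ag: "aff s g" and ah: "aff s h"
    and cond: "\<forall>b\<in>vecs s. \<rho> (lin0 s h (\<rho> b)) = lin0 s g b"
  shows "(\<lambda>w. smap g h ` w) ` Code s \<rho> = Code s \<rho>"
proof (rule endo_inj_surj)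
  show "finite (Code s \<rho>)" by (rule finite_Code)
  have bp: "bij_betw (smap g h) (positions s) (positions s)"
    using bij_smap ag ah unfolding aff_def by blast
  show "(\<lambda>w. smap g h ` w) ` Code s \<rho> \<subseteq> Code s \<rho>"
  proof
    fix y assume "y \<in> (\<lambda>w. smap g h ` w) ` Code s \<rho>"
    then obtain w where w: "w \<in> Code s \<rho>" and y: "y = smap g h ` w" by blast
    have wP: "w \<subseteq> positions s" using Code_pos[OF w] .
    have yP: "y \<subseteq> positions s" using bp wP unfolding y bij_betw_def by blast
    have Lw: "Lp w \<subseteq> vecs s" and Rw: "Rp w \<subseteq> vecs s" using pos_Lp[OF wP] pos_Rp[OF wP] .
    have ew: "even (card (Lp w))" "even (card (Rp w))" and sw: "vsum s (Rp w) = \<rho> (vsum s (Lp w))"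
      using w unfolding Code_def by auto
    have e1: "even (card (Lp y))" unfolding y Lp_smap using card_aff_image[OF ah Rw] ew by simp
    have e2: "even (card (Rp y))" unfolding y Rp_smap using card_aff_image[OF ag Lw] ew by simp
    have v1: "vsum s (Lp y) = lin0 s h (vsum s (Rp w))"
      unfolding y Lp_smap by (rule vsum_aff_image_even[OF ah Rw ew(2)])
    have v2: "vsum s (Rp y) = lin0 s g (vsum s (Lp w))"
      unfolding y Rp_smap by (rule vsum_aff_image_even[OF ag Lw ew(1)])
    have "vsum s (Rp y) = \<rho> (vsum s (Lp y))"
      unfolding v1 v2 sw using cond by simp
    then show "y \<in> Code s \<rho>" unfolding Code_def using yP e1 e2 by blast
  qed
  show "inj_on (\<lambda>w. smap g h ` w) (Code s \<rho>)"
  proof (rule inj_onI)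
    fix w1 w2 assume w: "w1 \<in> Code s \<rho>" "w2 \<in> Code s \<rho>" and e: "smap g h ` w1 = smap g h ` w2"
    have "inj_on (smap g h) (positions s)" using bp unfolding bij_betw_def by blast
    then show "w1 = w2" using e Code_pos[OF w(1)] Code_pos[OF w(2)] inj_on_image_eq_iff by metis
  qed
qed

definition Kp :: "nat \<Rightarrow> (bool list \<Rightarrow> bool list) \<Rightarrow> bool" where
  "Kp s \<rho> \<longleftrightarrow> (\<exists>M N. lin s M \<and> lin s N \<and> (\<forall>x\<in>vecs s. \<rho> (M (\<rho> x)) = N x))"

lemma pmap_aut:
  assumes pf: "perm_fix0 s \<rho>" and ag: "aff s g" and ah: "aff s h"
    and cond: "\<forall>b\<in>vecs s. \<rho> (lin0 s g b) = lin0 s h (\<rho> b)"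
  shows "bij_betw (pmap g h) (positions s) (positions s) \<and> (\<lambda>y. pmap g h ` y) ` Code s \<rho> = Code s \<rho>"
proof
  show "bij_betw (pmap g h) (positions s) (positions s)"
    using bij_pmap ag ah unfolding aff_def by blast
  have c: "\<forall>b\<in>vecs s. \<rho> (vadd (vsum s (Lp {})) (lin0 s g b)) = vadd (vsum s (Rp {})) (lin0 s h (\<rho> b))"
  proof
    fix b assume b: "b \<in> vecs s"
    have l1: "length (lin0 s g b) = s" using lin0_len[OF ag] b by simp
    have l2: "length (lin0 s h (\<rho> b)) = s" using lin0_len[OF ah] pf_len[OF pf] b by simp
    show "\<rho> (vadd (vsum s (Lp {})) (lin0 s g b)) = vadd (vsum s (Rp {})) (lin0 s h (\<rho> b))"
      using l1 l2 cond b by simp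
  qed
  show "(\<lambda>y. pmap g h ` y) ` Code s \<rho> = Code s \<rho>"
    using code_pmap[OF pf ag ah empty_Code[OF pf] c] by simp
qed

lemma smap_aut:
  assumes pf: "perm_fix0 s \<rho>" and ag: "aff s g" and ah: "aff s h"
    and cond: "\<forall>b\<in>vecs s. \<rho> (lin0 s h (\<rho> b)) = lin0 s g b"
  shows "bij_betw (smap g h) (positions s) (positions s) \<and> (\<lambda>y. smap g h ` y) ` Code s \<rho> = Code s \<rho>"
proof
  show "bij_betw (smap g h) (positions s) (positions s)"
    using bij_smap ag ah unfolding aff_def by blast
  show "(\<lambda>y. smap g h ` y) ` Code s \<rho> = Code s \<rho>" by (rule code_smap[OF pf ag ah cond])
qed

lemma shift_aff: "length c = s \<Longrightarrow> aff s (\<lambda>z. vadd z c)"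
  using lin_aff_shift(1)[OF lin_id[of s]] by simp

lemma shift_lin0: "length c = s \<Longrightarrow> length z = s \<Longrightarrow> lin0 s (\<lambda>z. vadd z c) z = z"
  using lin_aff_shift(2)[OF lin_id[of s]] by simp

lemma K_trans:
  assumes pf: "perm_fix0 s \<rho>" and K: "Kp s \<rho>" and i: "i \<in> positions s" and j: "j \<in> positions s"
  shows "\<exists>\<pi>. bij_betw \<pi> (positions s) (positions s) \<and> (\<lambda>y. \<pi> ` y) ` Code s \<rho> = Code s \<rho> \<and> \<pi> i = j"
proof -
  obtain M N where M: "lin s M" and N: "lin s N" and MN: "\<forall>x\<in>vecs s. \<rho> (M (\<rho> x)) = N x"
    using K unfolding Kp_def by blast
  have rl: "\<And>b. length b = s \<Longrightarrow> length (\<rho> b) = s" using pf_len[OF pf] .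
  show ?thesis
  proof (cases i)
    case (Inl p)
    have p: "length p = s" using i Inl by simp
    show ?thesis
    proof (cases j)
      case (Inl q)
      have q: "length q = s" using j Inl by simp
      let ?g = "\<lambda>z. vadd z (vadd p q)" and ?h = "\<lambda>z. vadd z (zero s)"
      have ag: "aff s ?g" by (rule shift_aff) (simp add: p q)
      have ah: "aff s ?h" by (rule shift_aff) simp
      have "\<forall>b\<in>vecs s. \<rho> (lin0 s ?g b) = lin0 s ?h (\<rho> b)"
        using shift_lin0[of "vadd p q" s] shift_lin0[of "zero s" s] p q rl by simp
      then have "bij_betw (pmap ?g ?h) (positions s) (positions s) \<and> (\<lambda>y. pmap ?g ?h ` y) ` Code s \<rho> = Code s \<rho>"
        using pmap_aut[OF pf ag ah] by blast
      moreover have "pmap ?g ?h i = j" using \<open>i = Inl p\<close> Inl p q by (simp add: vadd_assoc[symmetric])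
      ultimately show ?thesis by blast
    next
      case (Inr q)
      have q: "length q = s" using j Inr by simp
      let ?g = "\<lambda>z. vadd (N z) (vadd (N p) q)" and ?h = "\<lambda>z. vadd (M z) (zero s)"
      have Np: "length (N p) = s" using lin_len[OF N p] .
      have ag: "aff s ?g" using lin_aff_shift(1)[OF N, of "vadd (N p) q"] Np q by simp
      have ah: "aff s ?h" using lin_aff_shift(1)[OF M, of "zero s"] by simp
      have "\<forall>b\<in>vecs s. \<rho> (lin0 s ?h (\<rho> b)) = lin0 s ?g b"
        using lin_aff_shift(2)[OF N, of "vadd (N p) q"] lin_aff_shift(2)[OF M, of "zero s"] Np q rl MN by simp
      then have "bij_betw (smap ?g ?h) (positions s) (positions s) \<and> (\<lambda>y. smap ?g ?h ` y) ` Code s \<rho> = Code s \<rho>"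
        using smap_aut[OF pf ag ah] by blast
      moreover have "smap ?g ?h i = j" using \<open>i = Inl p\<close> Inr Np q by (simp add: vadd_assoc[symmetric])
      ultimately show ?thesis by blast
    qed
  next
    case (Inr p)
    have p: "length p = s" using i Inr by simp
    show ?thesis
    proof (cases j)
      case (Inr q)
      have q: "length q = s" using j Inr by simp
      let ?h = "\<lambda>z. vadd z (vadd p q)" and ?g = "\<lambda>z. vadd z (zero s)"
      have ah: "aff s ?h" by (rule shift_aff) (simp add: p q)
      have ag: "aff s ?g" by (rule shift_aff) simp
      have "\<forall>b\<in>vecs s. \<rho> (lin0 s ?g b) = lin0 s ?h (\<rho> b)"
        using shift_lin0[of "vadd p q" s] shift_lin0[of "zero s" s] p q rl by simp
      then have "bij_betw (pmap ?g ?h) (positions s) (positions s) \<and> (\<lambda>y. pmap ?g ?h ` y) ` Code s \<rho> = Code s \<rho>"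
        using pmap_aut[OF pf ag ah] by blast
      moreover have "pmap ?g ?h i = j" using \<open>i = Inr p\<close> Inr p q by (simp add: vadd_assoc[symmetric])
      ultimately show ?thesis by blast
    next
      case (Inl q)
      have q: "length q = s" using j Inl by simp
      let ?g = "\<lambda>z. vadd (N z) (zero s)" and ?h = "\<lambda>z. vadd (M z) (vadd (M p) q)"
      have Mp: "length (M p) = s" using lin_len[OF M p] .
      have ah: "aff s ?h" using lin_aff_shift(1)[OF M, of "vadd (M p) q"] Mp q by simp
      have ag: "aff s ?g" using lin_aff_shift(1)[OF N, of "zero s"] by simp
      have "\<forall>b\<in>vecs s. \<rho> (lin0 s ?h (\<rho> b)) = lin0 s ?g b"
        using lin_aff_shift(2)[OF M, of "vadd (M p) q"] lin_aff_shift(2)[OF N, of "zero s"] Mp q rl MN by simp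
      then have "bij_betw (smap ?g ?h) (positions s) (positions s) \<and> (\<lambda>y. smap ?g ?h ` y) ` Code s \<rho> = Code s \<rho>"
        using smap_aut[OF pf ag ah] by blast
      moreover have "smap ?g ?h i = j" using \<open>i = Inr p\<close> Inl Mp q by (simp add: vadd_assoc[symmetric])
      ultimately show ?thesis by blast
    qed
  qed
qed

lemma PAut_SQS:
  assumes pf: "perm_fix0 s \<rho>" and b: "bij_betw \<pi> (positions s) (positions s)"
    and c: "(\<lambda>y. \<pi> ` y) ` Code s \<rho> = Code s \<rho>"
  shows "(\<lambda>y. \<pi> ` y) ` SQS_blocks s \<rho> = SQS_blocks s \<rho>"
proof -
  have inj: "inj_on \<pi> (positions s)" using b unfolding bij_betw_def by blast
  have ci: "card (\<pi> ` W) = card W" if "W \<in> Code s \<rho>" for W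
    using card_image[OF inj_on_subset[OF inj Code_pos[OF that]]] .
  have "(\<lambda>y. \<pi> ` y) ` {W \<in> Code s \<rho>. card W = 4} = {W \<in> Code s \<rho>. card W = 4}"
  proof (intro equalityI subsetI)
    fix V assume "V \<in> (\<lambda>y. \<pi> ` y) ` {W \<in> Code s \<rho>. card W = 4}"
    then obtain W where W: "W \<in> Code s \<rho>" "card W = 4" "V = \<pi> ` W" by blast
    have "V \<in> Code s \<rho>" using W c by blast
    then show "V \<in> {W \<in> Code s \<rho>. card W = 4}" using ci[OF W(1)] W by simp
  next
    fix V assume "V \<in> {W \<in> Code s \<rho>. card W = 4}"
    then have V: "V \<in> Code s \<rho>" "card V = 4" by auto
    then obtain W where W: "W \<in> Code s \<rho>" "V = \<pi> ` W" using c by (metis imageE)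
    have "card W = 4" using ci[OF W(1)] W V by simp
    then show "V \<in> (\<lambda>y. \<pi> ` y) ` {W \<in> Code s \<rho>. card W = 4}" using W by blast
  qed
  then show ?thesis using SQS_eq[OF pf] by simp
qed

lemma pf_Scode: assumes pf: "perm_fix0 s \<rho>" shows "Scode s \<rho> = Code s \<rho>"
proof -
  have z: "\<rho> (zero s) = zero s" using pf unfolding perm_fix0_def by blast
  have m: "\<forall>a\<in>vecs s. \<rho> a \<in> vecs s" using pf_len[OF pf] by simp
  show ?thesis by (rule Scode_eq[OF z m])
qed

lemma T_coord:
  assumes pf: "perm_fix0 s \<rho>" and K: "Kp s \<rho>"
  shows "coord_transitive (positions s) (Scode s \<rho>)"
proof -
  have e: "Scode s \<rho> = Code s \<rho>" by (rule pf_Scode[OF pf])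
  show ?thesis unfolding coord_transitive_def e by (intro ballI) (rule K_trans[OF pf K])
qed

lemma T_point:
  assumes pf: "perm_fix0 s \<rho>" and K: "Kp s \<rho>"
  shows "point_transitive (positions s) (SQS_blocks s \<rho>)"
  unfolding point_transitive_def
proof (intro ballI)
  fix p q assume "p \<in> positions s" "q \<in> positions s"
  then obtain \<pi> where b: "bij_betw \<pi> (positions s) (positions s)" and c: "(\<lambda>y. \<pi> ` y) ` Code s \<rho> = Code s \<rho>" and e: "\<pi> p = q"
    using K_trans[OF pf K] by blast
  show "\<exists>\<sigma>. bij_betw \<sigma> (positions s) (positions s) \<and> (\<lambda>b. \<sigma> ` b) ` SQS_blocks s \<rho> = SQS_blocks s \<rho> \<and> \<sigma> p = q"
    by (intro exI[of _ \<pi>] conjI b e PAut_SQS[OF pf b c])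
qed

lemma coord_point:
  assumes pf: "perm_fix0 s \<rho>" and ct: "coord_transitive (positions s) (Scode s \<rho>)"
  shows "point_transitive (positions s) (SQS_blocks s \<rho>)"
proof -
  have e: "Scode s \<rho> = Code s \<rho>" by (rule pf_Scode[OF pf])
  show ?thesis unfolding point_transitive_def
  proof (intro ballI)
    fix p q assume "p \<in> positions s" "q \<in> positions s"
    then obtain \<pi> where b: "bij_betw \<pi> (positions s) (positions s)" and c: "(\<lambda>y. \<pi> ` y) ` Code s \<rho> = Code s \<rho>" and e: "\<pi> p = q"
      using ct unfolding coord_transitive_def e by blast
    show "\<exists>\<sigma>. bij_betw \<sigma> (positions s) (positions s) \<and> (\<lambda>b. \<sigma> ` b) ` SQS_blocks s \<rho> = SQS_blocks s \<rho> \<and> \<sigma> p = q"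
      by (intro exI[of _ \<pi>] conjI b e PAut_SQS[OF pf b c])
  qed
qed

lemma card_symd:
  assumes "finite A" "finite B"
  shows "card (symd A B) + 2 * card (A \<inter> B) = card A + card B"
proof -
  have 1: "card A = card (A - B) + card (A \<inter> B)"
  proof -
    have e: "A = (A - B) \<union> (A \<inter> B)" by blast
    have "(A - B) \<inter> (A \<inter> B) = {}" by blast
    then show ?thesis using assms card_Un_disjoint[of "A-B" "A \<inter> B"] e by simp
  qed
  have 2: "card B = card (B - A) + card (A \<inter> B)"
  proof -
    have e: "B = (B - A) \<union> (A \<inter> B)" by blast
    have "(B - A) \<inter> (A \<inter> B) = {}" by blast
    then show ?thesis using assms card_Un_disjoint[of "B-A" "A \<inter> B"] e by simp
  qed
  have 3: "card (symd A B) = card (A - B) + card (B - A)"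
  proof -
    have "(A - B) \<inter> (B - A) = {}" by blast
    then show ?thesis unfolding symd_def using assms card_Un_disjoint[of "A-B" "B-A"] by simp
  qed
  show ?thesis using 1 2 3 by simp
qed

lemma image_symd:
  assumes "inj_on f P" "A \<subseteq> P" "B \<subseteq> P"
  shows "f ` symd A B = symd (f ` A) (f ` B)"
proof -
  have "f ` (A - B) = f ` A - f ` B" using inj_on_image_set_diff[OF assms(1) _ assms(3)] assms(2) by blast
  moreover have "f ` (B - A) = f ` B - f ` A" using inj_on_image_set_diff[OF assms(1) _ assms(2)] assms(3) by blast
  ultimately show ?thesis unfolding symd_def by (simp add: image_Un)
qed

lemma block_Lsum:
  assumes pf: "perm_fix0 s \<rho>" and W: "W \<in> Code s \<rho>" "card W = 4"
    and uv: "Inl u \<in> W" "Inl v \<in> W" "u \<noteq> v"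
  shows "vsum s (Lp W) = zero s \<or> vsum s (Lp W) = vadd u v"
proof -
  have P: "W \<subseteq> positions s" using Code_pos[OF W(1)] .
  have fL: "finite (Lp W)" using fin_Lp[OF P] .
  have sub: "{u, v} \<subseteq> Lp W" using uv by simp
  have c2: "card {u,v} = 2" using uv by simp
  have ge: "card (Lp W) \<ge> 2" using card_mono[OF fL sub] c2 by simp
  have cs: "card (Lp W) + card (Rp W) = 4" using card_pos[OF P] W by simp
  have eL: "even (card (Lp W))" and sm: "vsum s (Rp W) = \<rho> (vsum s (Lp W))"
    using W unfolding Code_def by auto
  have "card (Lp W) = 2 \<or> card (Lp W) = 4" using even_le4[OF eL] cs ge by auto
  then show ?thesis
  proof
    assume "card (Lp W) = 2"
    then have "Lp W = {u, v}" using card_subset_eq[OF fL sub] c2 by simp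
    moreover have "length u = s" "length v = s" using uv P by auto
    ultimately show ?thesis using uv by (simp add: vsum_pair)
  next
    assume "card (Lp W) = 4"
    then have "Rp W = {}" using cs fin_Rp[OF P] by simp
    then have "\<rho> (vsum s (Lp W)) = zero s" using sm by simp
    then show ?thesis using pf_zero_iff[OF pf] by simp
  qed
qed

lemma block_symd:
  assumes pf: "perm_fix0 s \<rho>" and A: "A \<in> Code s \<rho>" "card A = 4" and B: "B \<in> Code s \<rho>" "card B = 4"
    and AB: "A \<inter> B = {Inl u, Inl v}" and uv: "u \<noteq> v"
  shows "symd A B \<in> Code s \<rho> \<and> card (symd A B) = 4"
proof -
  have PA: "A \<subseteq> positions s" using Code_pos[OF A(1)] .
  have PB: "B \<subseteq> positions s" using Code_pos[OF B(1)] .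
  have uA: "Inl u \<in> A" "Inl v \<in> A" "Inl u \<in> B" "Inl v \<in> B" using AB by auto
  have lu: "length u = s" "length v = s" using uA PA by auto
  have z: "\<rho> (zero s) = zero s" using pf unfolding perm_fix0_def by blast
  let ?t = "vadd u v"
  have lt: "length ?t = s" using lu by simp
  have rt: "length (\<rho> ?t) = s" using pf_len[OF pf lt] .
  have sA: "vsum s (Lp A) = zero s \<or> vsum s (Lp A) = ?t" using block_Lsum[OF pf A uA(1,2) uv] .
  have sB: "vsum s (Lp B) = zero s \<or> vsum s (Lp B) = ?t" using block_Lsum[OF pf B uA(3,4) uv] .
  have eA: "even (card (Lp A))" "even (card (Rp A))" and smA: "vsum s (Rp A) = \<rho> (vsum s (Lp A))"
    using A unfolding Code_def by auto
  have eB: "even (card (Lp B))" "even (card (Rp B))" and smB: "vsum s (Rp B) = \<rho> (vsum s (Lp B))"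
    using B unfolding Code_def by auto
  have key: "\<rho> (vadd (vsum s (Lp A)) (vsum s (Lp B))) = vadd (\<rho> (vsum s (Lp A))) (\<rho> (vsum s (Lp B)))"
    using sA sB z lt rt by (elim disjE) simp_all
  have P: "symd A B \<subseteq> positions s" by (rule symd_sub[OF PA PB])
  have e1: "even (card (Lp (symd A B)))"
    using odd_card_symd[OF fin_Lp[OF PA] fin_Lp[OF PB]] eA eB by simp
  have e2: "even (card (Rp (symd A B)))"
    using odd_card_symd[OF fin_Rp[OF PA] fin_Rp[OF PB]] eA eB by simp
  have v: "vsum s (Rp (symd A B)) = \<rho> (vsum s (Lp (symd A B)))"
    using vsum_symd[OF fin_Rp[OF PA] fin_Rp[OF PB], of s] vsum_symd[OF fin_Lp[OF PA] fin_Lp[OF PB], of s]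
      smA smB key by simp
  have "symd A B \<in> Code s \<rho>" unfolding Code_def using P e1 e2 v by blast
  moreover have "card (symd A B) = 4"
  proof -
    have "card (A \<inter> B) = 2" using AB uv by simp
    then show ?thesis using card_symd[OF finite_subset[OF PA] finite_subset[OF PB]] A B by simp
  qed
  ultimately show ?thesis by blast
qed

lemma Kp_of_lin:
  assumes pf: "perm_fix0 s \<rho>" and L: "\<forall>x\<in>vecs s. \<forall>y\<in>vecs s. \<rho> (vadd x y) = vadd (\<rho> x) (\<rho> y)"
  shows "Kp s \<rho>"
proof -
  have b: "bij_betw \<rho> (vecs s) (vecs s)" using pf unfolding perm_fix0_def by blast
  have bb: "bij_betw (\<lambda>x. \<rho> (\<rho> x)) (vecs s) (vecs s)" using bij_betw_trans[OF b b] by (simp add: comp_def)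
  have "\<rho> (\<rho> (vadd x y)) = vadd (\<rho> (\<rho> x)) (\<rho> (\<rho> y))" if "x \<in> vecs s" "y \<in> vecs s" for x y
  proof -
    have "\<rho> (vadd x y) = vadd (\<rho> x) (\<rho> y)" using L that by blast
    moreover have "\<rho> (vadd (\<rho> x) (\<rho> y)) = vadd (\<rho> (\<rho> x)) (\<rho> (\<rho> y))"
      using L that pf_len[OF pf] by simp
    ultimately show ?thesis by simp
  qed
  then have "lin s (\<lambda>x. \<rho> (\<rho> x))" unfolding lin_def using bb by blast
  then show ?thesis unfolding Kp_def using lin_id[of s]
    by (intro exI[of _ "\<lambda>z. z"] exI[of _ "\<lambda>x. \<rho> (\<rho> x)"]) simp
qed

lemma vadd_cancel_eq: "length w = length x \<Longrightarrow> length w = length y \<Longrightarrow> vadd w x = vadd w y \<Longrightarrow> x = y"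
  by (metis vadd_cancel_left)

lemma vadd_eq_self: "length w = length x \<Longrightarrow> vadd w x = w \<Longrightarrow> x = zero (length w)"
proof -
  assume a: "length w = length x" "vadd w x = w"
  have "x = vadd w (vadd w x)" using a(1) by simp
  also have "\<dots> = vadd w w" using a(2) by simp
  also have "\<dots> = zero (length w)" by simp
  finally show ?thesis .
qed

lemma vadd_ww: "length w = length x \<Longrightarrow> length w = length y \<Longrightarrow> vadd (vadd w x) (vadd w y) = vadd x y"
  by (rule nth_equalityI) auto

lemma claimA:
  assumes pf: "perm_fix0 s \<rho>"
    and x: "length x = s" and y: "length y = s" and nl: "\<rho> (vadd x y) \<noteq> vadd (\<rho> x) (\<rho> y)"
    and sb: "bij_betw \<sigma> (positions s) (positions s)"
    and sB: "(\<lambda>b. \<sigma> ` b) ` {W \<in> Code s \<rho>. card W = 4} = {W \<in> Code s \<rho>. card W = 4}"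
    and s0: "\<sigma> (Inl (zero s)) = Inr (zero s)"
    and zv: "length z = s"
  shows "\<exists>w. \<sigma> (Inl z) = Inr w"
proof (rule ccontr)
  let ?B = "{W \<in> Code s \<rho>. card W = 4}"
  assume "\<not> (\<exists>w. \<sigma> (Inl z) = Inr w)"
  then obtain w where sw: "\<sigma> (Inl z) = Inl w" by (cases "\<sigma> (Inl z)") auto
  have SQ: "SQS_blocks s \<rho> = ?B" using SQS_eq[OF pf] .
  have zz: "\<rho> (zero s) = zero s" using pf unfolding perm_fix0_def by blast
  have rl: "\<And>b. length b = s \<Longrightarrow> length (\<rho> b) = s" using pf_len[OF pf] .
  have inj: "inj_on \<sigma> (positions s)" using sb unfolding bij_betw_def by blast
  have img: "\<sigma> ` positions s = positions s" using sb unfolding bij_betw_def by blast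
  have "Inl w \<in> positions s" using sw img zv by (metis Inl_pos imageI)
  then have lw: "length w = s" by simp
  have znz: "z \<noteq> zero s" using sw s0 by auto
  have xnz: "x \<noteq> zero s"
  proof
    assume "x = zero s" then show False using nl y zz rl by simp
  qed
  have ynz: "y \<noteq> zero s"
  proof
    assume "y = zero s" then show False using nl x zz rl by simp
  qed
  have xy: "x \<noteq> y"
  proof
    assume "x = y" then show False using nl x zz rl by simp
  qed
  have rx: "\<rho> x \<noteq> zero s" using pf_zero_iff[OF pf x] xnz by simp
  have ry: "\<rho> y \<noteq> zero s" using pf_zero_iff[OF pf y] ynz by simp
  have rxy: "\<rho> x \<noteq> \<rho> y" using pf_inj[OF pf] x y xy by simp
  let ?c = "vadd w x" and ?d = "vadd w y"
  have lc: "length ?c = s" "length ?d = s" using lw x y by auto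
  have cw: "?c \<noteq> w" using vadd_eq_self[of w x] lw x xnz by auto
  have dw: "?d \<noteq> w" using vadd_eq_self[of w y] lw y ynz by auto
  have cd: "?c \<noteq> ?d" using vadd_cancel_eq[of w x y] lw x y xy by auto
  define B1 where "B1 = {Inl w, Inl ?c, Inr (zero s), Inr (\<rho> x)}"
  define B2 where "B2 = {Inl w, Inl ?d, Inr (zero s), Inr (\<rho> y)}"
  define Q where "Q = {Inl ?c, Inl ?d, Inr (\<rho> x), Inr (\<rho> y)}"
  have B1: "B1 \<in> ?B"
  proof -
    have "B1 \<in> SQS_blocks s \<rho>" unfolding B1_def
      using lw lc x rl rx by (intro SQS_I3) simp_all
    then show ?thesis using SQ by simp
  qed
  have B2: "B2 \<in> ?B"
  proof -
    have "B2 \<in> SQS_blocks s \<rho>" unfolding B2_def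
      using lw lc y rl ry by (intro SQS_I3) simp_all
    then show ?thesis using SQ by simp
  qed
  have B12: "B1 \<inter> B2 = {Inl w, Inr (zero s)}"
    unfolding B1_def B2_def using cw dw cd rx ry rxy by auto
  have sQ: "symd B1 B2 = Q"
    unfolding B1_def B2_def Q_def symd_def using cw dw cd rx ry rxy by auto
  have Qn: "Q \<notin> ?B"
  proof
    assume "Q \<in> ?B"
    then have "vsum s (Rp Q) = \<rho> (vsum s (Lp Q))" unfolding Code_def by blast
    moreover have "Lp Q = {?c, ?d}" "Rp Q = {\<rho> x, \<rho> y}" unfolding Q_def by auto
    ultimately have "vadd (\<rho> x) (\<rho> y) = \<rho> (vadd ?c ?d)" using lc rl x y cd rxy by (simp add: vsum_pair)
    moreover have "vadd ?c ?d = vadd x y" using vadd_ww[of w x y] lw x y by simp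
    ultimately show False using nl by simp
  qed
  let ?i = "inv_into (positions s) \<sigma>"
  have iinj: "inj_on ?i (positions s)" using inj_on_inv_into[of "positions s" \<sigma> "positions s"] img by simp
  have iw: "?i (Inl w) = Inl z" using sw inv_into_f_f[OF inj, of "Inl z"] zv by simp
  have i0: "?i (Inr (zero s)) = Inl (zero s)" using s0 inv_into_f_f[OF inj, of "Inl (zero s)"] by simp
  have pull: "?i ` W \<in> ?B" if "W \<in> ?B" for W
  proof -
    have "W \<in> (\<lambda>b. \<sigma> ` b) ` ?B" using that sB by simp
    then obtain W' where W': "W' \<in> ?B" "W = \<sigma> ` W'" by (rule imageE)
    have "W' \<subseteq> positions s" using W' Code_pos by blast
    then have "?i ` W = W'" using W'(2) inv_into_image_cancel[OF inj] by simp
    then show ?thesis using W' by simp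
  qed
  have push: "\<sigma> ` W \<in> ?B" if "W \<in> ?B" for W using that sB by blast
  have B1P: "B1 \<subseteq> positions s" using B1 Code_pos by blast
  have B2P: "B2 \<subseteq> positions s" using B2 Code_pos by blast
  have QP: "Q \<subseteq> positions s" unfolding Q_def using lc rl x y by simp
  have A1: "?i ` B1 \<in> ?B" using pull[OF B1] .
  have A2: "?i ` B2 \<in> ?B" using pull[OF B2] .
  have int: "?i ` B1 \<inter> ?i ` B2 = {Inl z, Inl (zero s)}"
    using inj_on_image_Int[OF iinj B1P B2P] B12 iw i0 by simp
  have "symd (?i ` B1) (?i ` B2) \<in> Code s \<rho> \<and> card (symd (?i ` B1) (?i ` B2)) = 4"
    using block_symd[OF pf _ _ _ _ int znz] A1 A2 by blast
  moreover have "symd (?i ` B1) (?i ` B2) = ?i ` Q"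
    using image_symd[OF iinj B1P B2P] sQ by simp
  ultimately have "?i ` Q \<in> ?B" by simp
  then have "\<sigma> ` ?i ` Q \<in> ?B" by (rule push)
  moreover have "\<sigma> ` ?i ` Q = Q" using image_inv_into_cancel[OF img QP] .
  ultimately show False using Qn by simp
qed

lemma sum4_solve:
  assumes "length p = s" "length q = s" "length r = s" "length t = s"
    and "vadd (vadd p q) (vadd r t) = zero s"
  shows "t = vadd (vadd p q) r"
proof (rule nth_equalityI)
  fix i assume i: "i < length t"
  have "vadd (vadd p q) (vadd r t) ! i = zero s ! i" using assms(5) by simp
  then show "t ! i = vadd (vadd p q) r ! i" using i assms(1-4) by auto
qed (use assms in simp)

lemma K1:
  assumes pf: "perm_fix0 s \<rho>" and pt: "point_transitive (positions s) (SQS_blocks s \<rho>)"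
  shows "Kp s \<rho>"
proof (cases "\<forall>x\<in>vecs s. \<forall>y\<in>vecs s. \<rho> (vadd x y) = vadd (\<rho> x) (\<rho> y)")
  case True then show ?thesis by (rule Kp_of_lin[OF pf])
next
  case False
  then obtain x y where x: "length x = s" and y: "length y = s" and nl: "\<rho> (vadd x y) \<noteq> vadd (\<rho> x) (\<rho> y)"
    by auto
  let ?B = "{W \<in> Code s \<rho>. card W = 4}"
  have SQ: "SQS_blocks s \<rho> = ?B" using SQS_eq[OF pf] .
  have zz: "\<rho> (zero s) = zero s" using pf unfolding perm_fix0_def by blast
  have rl: "\<And>b. length b = s \<Longrightarrow> length (\<rho> b) = s" using pf_len[OF pf] .
  have "\<exists>\<sigma>. bij_betw \<sigma> (positions s) (positions s) \<and> (\<lambda>b. \<sigma> ` b) ` SQS_blocks s \<rho> = SQS_blocks s \<rho> \<and> \<sigma> (Inl (zero s)) = Inr (zero s)"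
    using pt[unfolded point_transitive_def, rule_format, of "Inl (zero s)" "Inr (zero s)"] by simp
  then obtain \<sigma> where sb: "bij_betw \<sigma> (positions s) (positions s)"
    and sB: "(\<lambda>b. \<sigma> ` b) ` ?B = ?B" and s0: "\<sigma> (Inl (zero s)) = Inr (zero s)"
    unfolding SQ by blast
  have inj: "inj_on \<sigma> (positions s)" using sb unfolding bij_betw_def by blast
  have img: "\<sigma> ` positions s = positions s" using sb unfolding bij_betw_def by blast
  have sP: "\<sigma> p \<in> positions s" if "p \<in> positions s" for p using img that by blast
  have push: "\<sigma> ` W \<in> ?B" if "W \<in> ?B" for W using that sB by blast
  define \<alpha> where "\<alpha> z = projr (\<sigma> (Inl z))" for z
  define \<beta> where "\<beta> z = projl (\<sigma> (Inr z))" for z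
  have sa: "\<sigma> (Inl z) = Inr (\<alpha> z)" if zl: "length z = s" for z
  proof -
    obtain w where "\<sigma> (Inl z) = Inr w" using claimA[OF pf x y nl sb sB s0 zl] by blast
    then show ?thesis unfolding \<alpha>_def by simp
  qed
  have la: "length (\<alpha> z) = s" if "length z = s" for z
    using sP[of "Inl z"] sa[OF that] that by simp
  have ainj: "inj_on \<alpha> (vecs s)"
  proof (rule inj_onI)
    fix a b assume ab: "a \<in> vecs s" "b \<in> vecs s" "\<alpha> a = \<alpha> b"
    then have e: "\<sigma> (Inl a) = \<sigma> (Inl b)" using sa by simp
    have "(Inl a :: bool list + bool list) = Inl b" by (rule inj_onD[OF inj e]) (use ab in simp_all)
    then show "a = b" by simp
  qed
  have aim: "\<alpha> ` vecs s = vecs s"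
  proof (rule endo_inj_surj[OF vecs_finite _ ainj])
    show "\<alpha> ` vecs s \<subseteq> vecs s" using la by auto
  qed
  have abij: "bij_betw \<alpha> (vecs s) (vecs s)" using ainj aim unfolding bij_betw_def by blast
  have sbe: "\<sigma> (Inr z) = Inl (\<beta> z)" if zl: "length z = s" for z
  proof -
    have "\<exists>w. \<sigma> (Inr z) = Inl w"
    proof (cases "\<sigma> (Inr z)")
      case (Inl w) then show ?thesis by blast
    next
      case (Inr w)
      have "Inr w \<in> positions s" using sP[of "Inr z"] zl Inr by simp
      then have "w \<in> vecs s" by simp
      then have "w \<in> \<alpha> ` vecs s" using aim by simp
      then obtain z' where z': "z' \<in> vecs s" "\<alpha> z' = w" by (rule imageE) simp
      then have e: "\<sigma> (Inl z') = \<sigma> (Inr z)" using sa Inr by simp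
      have "Inl z' = Inr z" by (rule inj_onD[OF inj e]) (use z' zl in simp_all)
      then show ?thesis by simp
    qed
    then show ?thesis unfolding \<beta>_def by auto
  qed
  have lb: "length (\<beta> z) = s" if "length z = s" for z
    using sP[of "Inr z"] sbe[OF that] that by simp
  have binj: "inj_on \<beta> (vecs s)"
  proof (rule inj_onI)
    fix a b assume ab: "a \<in> vecs s" "b \<in> vecs s" "\<beta> a = \<beta> b"
    then have e: "\<sigma> (Inr a) = \<sigma> (Inr b)" using sbe by simp
    have "(Inr a :: bool list + bool list) = Inr b" by (rule inj_onD[OF inj e]) (use ab in simp_all)
    then show "a = b" by simp
  qed
  have bim: "\<beta> ` vecs s = vecs s"
  proof (rule endo_inj_surj[OF vecs_finite _ binj])
    show "\<beta> ` vecs s \<subseteq> vecs s" using lb by auto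
  qed
  have bbij: "bij_betw \<beta> (vecs s) (vecs s)" using binj bim unfolding bij_betw_def by blast
  have ainj': "\<alpha> a = \<alpha> b \<longleftrightarrow> a = b" if ab: "length a = s" "length b = s" for a b
  proof
    assume "\<alpha> a = \<alpha> b" then show "a = b" using inj_onD[OF ainj] ab by simp
  qed simp
  have binj': "\<beta> a = \<beta> b \<longleftrightarrow> a = b" if ab: "length a = s" "length b = s" for a b
  proof
    assume "\<beta> a = \<beta> b" then show "a = b" using inj_onD[OF binj] ab by simp
  qed simp
  have aff4: "f (vadd (vadd a b) c) = vadd (vadd (f a) (f b)) (f c)"
    if fl: "\<And>z. length z = s \<Longrightarrow> length (f z) = s"
      and finj: "\<And>a b. length a = s \<Longrightarrow> length b = s \<Longrightarrow> f a = f b \<longleftrightarrow> a = b"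
      and blk: "\<And>a b c d. length a = s \<Longrightarrow> length b = s \<Longrightarrow> length c = s \<Longrightarrow> length d = s \<Longrightarrow>
                  distinct [a,b,c,d] \<Longrightarrow> vadd (vadd a b) (vadd c d) = zero s \<Longrightarrow>
                  vadd (vadd (f a) (f b)) (vadd (f c) (f d)) = zero s"
      and abc: "length a = s" "length b = s" "length c = s"
    for f a b c
  proof -
    have fa: "length (f a) = s" "length (f b) = s" "length (f c) = s" using fl abc by auto
    show ?thesis
    proof (cases "a = b \<or> a = c \<or> b = c")
      case True
      then show ?thesis
      proof (elim disjE)
        assume "a = b" then show ?thesis using abc fa by (simp add: vadd_assoc[symmetric])
      next
        assume ac: "a = c"
        have "vadd (vadd a b) a = b" using abc by (intro nth_equalityI) auto
        moreover have "vadd (vadd (f a) (f b)) (f a) = f b" using fa by (intro nth_equalityI) auto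
        ultimately show ?thesis using ac by simp
      next
        assume "b = c" then show ?thesis using abc fa by (simp add: vadd_assoc)
      qed
    next
      case False
      let ?d = "vadd (vadd a b) c"
      have ld: "length ?d = s" using abc by simp
      have da: "?d \<noteq> a"
      proof
        assume e: "?d = a"
        have "vadd (vadd a b) c ! i = a ! i" if "i < s" for i using e by simp
        then have "b = c" using abc by (intro nth_equalityI) auto
        then show False using False by simp
      qed
      have db: "?d \<noteq> b"
      proof
        assume e: "?d = b"
        have "vadd (vadd a b) c ! i = b ! i" if "i < s" for i using e by simp
        then have "a = c" using abc by (intro nth_equalityI) auto
        then show False using False by simp
      qed
      have dc: "?d \<noteq> c"
      proof
        assume e: "?d = c"
        have "vadd (vadd a b) c ! i = c ! i" if "i < s" for i using e by simp
        then have "a = b" using abc by (intro nth_equalityI) auto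
        then show False using False by simp
      qed
      have dist: "distinct [a,b,c,?d]" using False da db dc by auto
      have z4: "vadd (vadd a b) (vadd c ?d) = zero s" using abc by (intro nth_equalityI) auto
      have "vadd (vadd (f a) (f b)) (vadd (f c) (f ?d)) = zero s" using blk[OF abc ld dist z4] .
      then show ?thesis using sum4_solve[of "f a" s "f b" "f c" "f ?d"] fa fl[OF ld] by simp
    qed
  qed
  have blkL: "vadd (vadd (\<alpha> a) (\<alpha> b)) (vadd (\<alpha> c) (\<alpha> d)) = zero s"
    if l: "length a = s" "length b = s" "length c = s" "length d = s"
      and dist: "distinct [a,b,c,d]" and z4: "vadd (vadd a b) (vadd c d) = zero s" for a b c d
  proof -
    have "Inl ` {a,b,c,d} \<in> SQS_blocks s \<rho>" using l dist z4 by (intro SQS_I1) simp_all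
    then have X: "Inl ` {a,b,c,d} \<in> ?B" using SQ by simp
    have "\<sigma> ` Inl ` {a,b,c,d} \<in> ?B" by (rule push[OF X])
    moreover have "\<sigma> ` Inl ` {a,b,c,d} = Inr ` {\<alpha> a, \<alpha> b, \<alpha> c, \<alpha> d}" using sa l by simp
    ultimately have "Inr ` {\<alpha> a, \<alpha> b, \<alpha> c, \<alpha> d} \<in> Code s \<rho>" by simp
    then have "vsum s {\<alpha> a, \<alpha> b, \<alpha> c, \<alpha> d} = zero s" unfolding Code_def using zz by simp
    moreover have "distinct [\<alpha> a, \<alpha> b, \<alpha> c, \<alpha> d]" using dist ainj' l by simp
    ultimately show ?thesis using vsum4[of "\<alpha> a" "\<alpha> b" "\<alpha> c" "\<alpha> d" s] la l by simp
  qed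
  have blkR: "vadd (vadd (\<beta> a) (\<beta> b)) (vadd (\<beta> c) (\<beta> d)) = zero s"
    if l: "length a = s" "length b = s" "length c = s" "length d = s"
      and dist: "distinct [a,b,c,d]" and z4: "vadd (vadd a b) (vadd c d) = zero s" for a b c d
  proof -
    have "Inr ` {a,b,c,d} \<in> SQS_blocks s \<rho>" using l dist z4 by (intro SQS_I2) simp_all
    then have X: "Inr ` {a,b,c,d} \<in> ?B" using SQ by simp
    have "\<sigma> ` Inr ` {a,b,c,d} \<in> ?B" by (rule push[OF X])
    moreover have "\<sigma> ` Inr ` {a,b,c,d} = Inl ` {\<beta> a, \<beta> b, \<beta> c, \<beta> d}" using sbe l by simp
    ultimately have W: "Inl ` {\<beta> a, \<beta> b, \<beta> c, \<beta> d} \<in> Code s \<rho>" by simp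
    have l': "length (\<beta> a) = s" "length (\<beta> b) = s" "length (\<beta> c) = s" "length (\<beta> d) = s" using lb l by auto
    have "\<rho> (vsum s {\<beta> a, \<beta> b, \<beta> c, \<beta> d}) = zero s" using W unfolding Code_def by simp
    then have "vsum s {\<beta> a, \<beta> b, \<beta> c, \<beta> d} = zero s" using pf_zero_iff[OF pf] by simp
    moreover have "distinct [\<beta> a, \<beta> b, \<beta> c, \<beta> d]" using dist binj' l by simp
    ultimately show ?thesis using vsum4[of "\<beta> a" "\<beta> b" "\<beta> c" "\<beta> d" s] l' by simp
  qed
  have affa: "aff s \<alpha>" unfolding aff_def
  proof (intro conjI abij ballI)
    fix a b c assume "a \<in> vecs s" "b \<in> vecs s" "c \<in> vecs s"
    then show "\<alpha> (vadd (vadd a b) c) = vadd (vadd (\<alpha> a) (\<alpha> b)) (\<alpha> c)"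
      using aff4[of \<alpha> a b c] la ainj' blkL by simp
  qed
  have affb: "aff s \<beta>" unfolding aff_def
  proof (intro conjI bbij ballI)
    fix a b c assume "a \<in> vecs s" "b \<in> vecs s" "c \<in> vecs s"
    then show "\<beta> (vadd (vadd a b) c) = vadd (vadd (\<beta> a) (\<beta> b)) (\<beta> c)"
      using aff4[of \<beta> a b c] lb binj' blkR by simp
  qed
  have mixed: "\<rho> (lin0 s \<beta> (\<rho> b)) = lin0 s \<alpha> b" if bl: "length b = s" for b
  proof (cases "b = zero s")
    case True
    then show ?thesis using lin0_zero[OF affa] lin0_zero[OF affb] zz by simp
  next
    case False
    have rb: "length (\<rho> b) = s" using rl[OF bl] .
    have rnz: "\<rho> b \<noteq> zero s" using pf_zero_iff[OF pf bl] False by simp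
    have "{Inl (zero s), Inl b, Inr (zero s), Inr (\<rho> b)} \<in> SQS_blocks s \<rho>"
      using bl rb rnz by (intro SQS_I3) simp_all
    then have X: "{Inl (zero s), Inl b, Inr (zero s), Inr (\<rho> b)} \<in> ?B" using SQ by simp
    have "\<sigma> ` {Inl (zero s), Inl b, Inr (zero s), Inr (\<rho> b)} \<in> ?B" by (rule push[OF X])
    moreover have "\<sigma> ` {Inl (zero s), Inl b, Inr (zero s), Inr (\<rho> b)} = {Inr (\<alpha> (zero s)), Inr (\<alpha> b), Inl (\<beta> (zero s)), Inl (\<beta> (\<rho> b))}"
      using sa sbe bl rb by simp
    ultimately have W: "{Inr (\<alpha> (zero s)), Inr (\<alpha> b), Inl (\<beta> (zero s)), Inl (\<beta> (\<rho> b))} \<in> Code s \<rho>" by simp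
    have d1: "\<alpha> (zero s) \<noteq> \<alpha> b" using ainj'[of "zero s" b] bl False by auto
    have d2: "\<beta> (zero s) \<noteq> \<beta> (\<rho> b)" using binj'[of "zero s" "\<rho> b"] rb rnz by auto
    have l4: "length (\<alpha> (zero s)) = s" "length (\<alpha> b) = s" "length (\<beta> (zero s)) = s" "length (\<beta> (\<rho> b)) = s"
      using la lb bl rb by auto
    have "vsum s {\<alpha> (zero s), \<alpha> b} = \<rho> (vsum s {\<beta> (zero s), \<beta> (\<rho> b)})"
      using W unfolding Code_def by (simp add: insert_commute)
    then have "vadd (\<alpha> (zero s)) (\<alpha> b) = \<rho> (vadd (\<beta> (zero s)) (\<beta> (\<rho> b)))"
      using d1 d2 l4 by (simp add: vsum_pair)
    then show ?thesis unfolding lin0_def by (simp add: vadd_comm)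
  qed
  show ?thesis unfolding Kp_def
    by (intro exI[of _ "lin0 s \<beta>"] exI[of _ "lin0 s \<alpha>"] conjI lin0_lin[OF affa] lin0_lin[OF affb])
       (use mixed in simp)
qed

lemma cat_app[simp]: "length x = r \<Longrightarrow> cat_perm r f f' (x @ y) = f x @ f' y"
  by (simp add: cat_perm_def)

lemma split_vecsE:
  assumes "z \<in> vecs (r + r')"
  obtains x y where "z = x @ y" "length x = r" "length y = r'"
proof -
  have "z = take r z @ drop r z" "length (take r z) = r" "length (drop r z) = r'" using assms by simp_all
  then show ?thesis using that by blast
qed

lemma vadd_append: "length a = length c \<Longrightarrow> vadd (a @ b) (c @ d) = vadd a c @ vadd b d"
  by (simp add: vadd_def)

lemma zero_append: "zero (r + r') = zero r @ zero r'"
  by (simp add: zero_def replicate_add)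

lemma append_eq_len: "length a = length c \<Longrightarrow> (a @ b = c @ d) \<longleftrightarrow> a = c \<and> b = d"
  by simp

lemma bij_cat:
  assumes f: "bij_betw f (vecs r) (vecs r)" and f': "bij_betw f' (vecs r') (vecs r')"
  shows "bij_betw (cat_perm r f f') (vecs (r + r')) (vecs (r + r'))"
proof (rule bij_betw_byWitness[where f'="cat_perm r (inv_into (vecs r) f) (inv_into (vecs r') f')"])
  have lf: "\<And>x. length x = r \<Longrightarrow> length (f x) = r" using bij_vecs_len[OF f] .
  have lf': "\<And>x. length x = r' \<Longrightarrow> length (f' x) = r'" using bij_vecs_len[OF f'] .
  have g: "bij_betw (inv_into (vecs r) f) (vecs r) (vecs r)" using bij_betw_inv_into[OF f] .
  have g': "bij_betw (inv_into (vecs r') f') (vecs r') (vecs r')" using bij_betw_inv_into[OF f'] .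
  have lg: "\<And>x. length x = r \<Longrightarrow> length (inv_into (vecs r) f x) = r" using bij_vecs_len[OF g] .
  have lg': "\<And>x. length x = r' \<Longrightarrow> length (inv_into (vecs r') f' x) = r'" using bij_vecs_len[OF g'] .
  have if1: "\<And>x. length x = r \<Longrightarrow> inv_into (vecs r) f (f x) = x"
    using f by (simp add: bij_betw_def inv_into_f_f)
  have if2: "\<And>x. length x = r' \<Longrightarrow> inv_into (vecs r') f' (f' x) = x"
    using f' by (simp add: bij_betw_def inv_into_f_f)
  have fi1: "\<And>x. length x = r \<Longrightarrow> f (inv_into (vecs r) f x) = x"
    using f by (simp add: bij_betw_def f_inv_into_f)
  have fi2: "\<And>x. length x = r' \<Longrightarrow> f' (inv_into (vecs r') f' x) = x"
    using f' by (simp add: bij_betw_def f_inv_into_f)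
  show "\<forall>z\<in>vecs (r + r'). cat_perm r (inv_into (vecs r) f) (inv_into (vecs r') f') (cat_perm r f f' z) = z"
  proof
    fix z assume "z \<in> vecs (r + r')"
    then obtain x y where z: "z = x @ y" "length x = r" "length y = r'" by (rule split_vecsE)
    show "cat_perm r (inv_into (vecs r) f) (inv_into (vecs r') f') (cat_perm r f f' z) = z"
      using z lf if1 if2 by simp
  qed
  show "\<forall>z\<in>vecs (r + r'). cat_perm r f f' (cat_perm r (inv_into (vecs r) f) (inv_into (vecs r') f') z) = z"
  proof
    fix z assume "z \<in> vecs (r + r')"
    then obtain x y where z: "z = x @ y" "length x = r" "length y = r'" by (rule split_vecsE)
    show "cat_perm r f f' (cat_perm r (inv_into (vecs r) f) (inv_into (vecs r') f') z) = z"
      using z lg fi1 fi2 by simp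
  qed
  show "cat_perm r f f' ` vecs (r + r') \<subseteq> vecs (r + r')"
  proof
    fix w assume "w \<in> cat_perm r f f' ` vecs (r + r')"
    then obtain z where zz: "z \<in> vecs (r + r')" "w = cat_perm r f f' z" by auto
    moreover obtain x y where "z = x @ y" "length x = r" "length y = r'" using zz(1) by (rule split_vecsE)
    ultimately show "w \<in> vecs (r + r')" using lf lf' by simp
  qed
  show "cat_perm r (inv_into (vecs r) f) (inv_into (vecs r') f') ` vecs (r + r') \<subseteq> vecs (r + r')"
  proof
    fix w assume "w \<in> cat_perm r (inv_into (vecs r) f) (inv_into (vecs r') f') ` vecs (r + r')"
    then obtain z where zz: "z \<in> vecs (r + r')" "w = cat_perm r (inv_into (vecs r) f) (inv_into (vecs r') f') z" by auto
    moreover obtain x y where "z = x @ y" "length x = r" "length y = r'" using zz(1) by (rule split_vecsE)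
    ultimately show "w \<in> vecs (r + r')" using lg lg' by simp
  qed
qed

lemma pf_cat:
  assumes "perm_fix0 r \<tau>" "perm_fix0 r' \<tau>'"
  shows "perm_fix0 (r + r') (cat_perm r \<tau> \<tau>')"
  unfolding perm_fix0_def
proof
  show "bij_betw (cat_perm r \<tau> \<tau>') (vecs (r + r')) (vecs (r + r'))"
    using bij_cat assms unfolding perm_fix0_def by blast
  show "cat_perm r \<tau> \<tau>' (zero (r + r')) = zero (r + r')"
    using assms unfolding perm_fix0_def zero_append by simp
qed

lemma lin_cat:
  assumes M: "lin r M" and M': "lin r' M'"
  shows "lin (r + r') (cat_perm r M M')"
  unfolding lin_def
proof
  show "bij_betw (cat_perm r M M') (vecs (r + r')) (vecs (r + r'))"
    using bij_cat M M' unfolding lin_def by blast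
  show "\<forall>x\<in>vecs (r + r'). \<forall>y\<in>vecs (r + r'). cat_perm r M M' (vadd x y) = vadd (cat_perm r M M' x) (cat_perm r M M' y)"
  proof (intro ballI)
    fix z w assume zw: "z \<in> vecs (r + r')" "w \<in> vecs (r + r')"
    obtain x y where z: "z = x @ y" "length x = r" "length y = r'" using zw(1) by (rule split_vecsE)
    obtain x' y' where w: "w = x' @ y'" "length x' = r" "length y' = r'" using zw(2) by (rule split_vecsE)
    show "cat_perm r M M' (vadd z w) = vadd (cat_perm r M M' z) (cat_perm r M M' w)"
      using z w lin_len[OF M] lin_len[OF M'] lin_eq[OF M] lin_eq[OF M'] by (simp add: vadd_append)
  qed
qed

lemma aff_cat:
  assumes g: "aff r g" and g': "aff r' g'"
  shows "aff (r + r') (cat_perm r g g')"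
  unfolding aff_def
proof
  show "bij_betw (cat_perm r g g') (vecs (r + r')) (vecs (r + r'))"
    using bij_cat g g' unfolding aff_def by blast
  show "\<forall>x\<in>vecs (r + r'). \<forall>y\<in>vecs (r + r'). \<forall>z\<in>vecs (r + r'). cat_perm r g g' (vadd (vadd x y) z) =
      vadd (vadd (cat_perm r g g' x) (cat_perm r g g' y)) (cat_perm r g g' z)"
  proof (intro ballI)
    fix u v w assume uvw: "u \<in> vecs (r + r')" "v \<in> vecs (r + r')" "w \<in> vecs (r + r')"
    obtain x y where u: "u = x @ y" "length x = r" "length y = r'" using uvw(1) by (rule split_vecsE)
    obtain x' y' where v: "v = x' @ y'" "length x' = r" "length y' = r'" using uvw(2) by (rule split_vecsE)
    obtain x'' y'' where w: "w = x'' @ y''" "length x'' = r" "length y'' = r'" using uvw(3) by (rule split_vecsE)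
    show "cat_perm r g g' (vadd (vadd u v) w) = vadd (vadd (cat_perm r g g' u) (cat_perm r g g' v)) (cat_perm r g g' w)"
      using u v w aff_len[OF g] aff_len[OF g'] aff_eq[OF g] aff_eq[OF g'] by (simp add: vadd_append)
  qed
qed

lemma Kp_cat:
  assumes pf: "perm_fix0 r \<tau>" and pf': "perm_fix0 r' \<tau>'" and K: "Kp r \<tau>" and K': "Kp r' \<tau>'"
  shows "Kp (r + r') (cat_perm r \<tau> \<tau>')"
proof -
  obtain M N where M: "lin r M" and N: "lin r N" and MN: "\<forall>x\<in>vecs r. \<tau> (M (\<tau> x)) = N x"
    using K unfolding Kp_def by blast
  obtain M' N' where M': "lin r' M'" and N': "lin r' N'" and MN': "\<forall>x\<in>vecs r'. \<tau>' (M' (\<tau>' x)) = N' x"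
    using K' unfolding Kp_def by blast
  have "\<forall>z\<in>vecs (r + r'). cat_perm r \<tau> \<tau>' (cat_perm r M M' (cat_perm r \<tau> \<tau>' z)) = cat_perm r N N' z"
  proof
    fix z assume "z \<in> vecs (r + r')"
    then obtain x y where z: "z = x @ y" "length x = r" "length y = r'" by (rule split_vecsE)
    show "cat_perm r \<tau> \<tau>' (cat_perm r M M' (cat_perm r \<tau> \<tau>' z)) = cat_perm r N N' z"
      using z pf_len[OF pf] pf_len[OF pf'] lin_len[OF M] MN MN' by simp
  qed
  then show ?thesis unfolding Kp_def using lin_cat[OF M M'] lin_cat[OF N N'] by blast
qed

definition Rprop :: "nat \<Rightarrow> (bool list \<Rightarrow> bool list) \<Rightarrow> bool" where
  "Rprop s \<rho> \<longleftrightarrow> (\<forall>a\<in>vecs s. \<forall>a'\<in>vecs s. \<exists>g h. aff s g \<and> aff s h \<and> g a = a' \<and>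
      (\<forall>z\<in>vecs s. \<rho> (g z) = h (\<rho> z)))"

lemma Rprop_cat:
  assumes pf: "perm_fix0 r \<tau>" and pf': "perm_fix0 r' \<tau>'" and R: "Rprop r \<tau>" and R': "Rprop r' \<tau>'"
  shows "Rprop (r + r') (cat_perm r \<tau> \<tau>')"
  unfolding Rprop_def
proof (intro ballI)
  fix a a' assume aa: "a \<in> vecs (r + r')" "a' \<in> vecs (r + r')"
  obtain x y where a: "a = x @ y" "length x = r" "length y = r'" using aa(1) by (rule split_vecsE)
  obtain x' y' where a': "a' = x' @ y'" "length x' = r" "length y' = r'" using aa(2) by (rule split_vecsE)
  have xv: "x \<in> vecs r" "x' \<in> vecs r" "y \<in> vecs r'" "y' \<in> vecs r'" using a a' by simp_all
  obtain g h where g: "aff r g" "aff r h" "g x = x'" "\<forall>z\<in>vecs r. \<tau> (g z) = h (\<tau> z)"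
    using R[unfolded Rprop_def, rule_format, OF xv(1) xv(2)] by blast
  obtain g' h' where g': "aff r' g'" "aff r' h'" "g' y = y'" "\<forall>z\<in>vecs r'. \<tau>' (g' z) = h' (\<tau>' z)"
    using R'[unfolded Rprop_def, rule_format, OF xv(3) xv(4)] by blast
  have "\<forall>z\<in>vecs (r + r'). cat_perm r \<tau> \<tau>' (cat_perm r g g' z) = cat_perm r h h' (cat_perm r \<tau> \<tau>' z)"
  proof
    fix z assume "z \<in> vecs (r + r')"
    then obtain u v where z: "z = u @ v" "length u = r" "length v = r'" by (rule split_vecsE)
    show "cat_perm r \<tau> \<tau>' (cat_perm r g g' z) = cat_perm r h h' (cat_perm r \<tau> \<tau>' z)"
      using z pf_len[OF pf] aff_len[OF g(1)] g(4) g'(4) by simp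
  qed
  moreover have "cat_perm r g g' a = a'" using a a' g(3) g'(3) by simp
  ultimately show "\<exists>g h. aff (r + r') g \<and> aff (r + r') h \<and> g a = a' \<and>
      (\<forall>z\<in>vecs (r + r'). cat_perm r \<tau> \<tau>' (g z) = h (cat_perm r \<tau> \<tau>' z))"
    using aff_cat[OF g(1) g'(1)] aff_cat[OF g(2) g'(2)] by blast
qed

lemma matvec_len[simp]: "length (matvec s M b) = s" by (simp add: matvec_def)

lemma matvec_add:
  assumes "length x = s" "length y = s"
  shows "matvec s M (vadd x y) = vadd (matvec s M x) (matvec s M y)"
proof (rule nth_equalityI)
  fix i assume "i < length (matvec s M (vadd x y))"
  then have i: "i < s" by simp
  have e: "{j. j < s \<and> M i j \<and> vadd x y ! j} = symd {j. j < s \<and> M i j \<and> x ! j} {j. j < s \<and> M i j \<and> y ! j}"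
    using assms unfolding symd_def by auto
  have f: "finite {j. j < s \<and> M i j \<and> x ! j}" "finite {j. j < s \<and> M i j \<and> y ! j}" by auto
  have m1: "matvec s M (vadd x y) ! i = odd (card {j. j < s \<and> M i j \<and> vadd x y ! j})"
    using i by (simp add: matvec_def)
  have m2: "matvec s M x ! i = odd (card {j. j < s \<and> M i j \<and> x ! j})"
    using i by (simp add: matvec_def)
  have m3: "matvec s M y ! i = odd (card {j. j < s \<and> M i j \<and> y ! j})"
    using i by (simp add: matvec_def)
  show "matvec s M (vadd x y) ! i = vadd (matvec s M x) (matvec s M y) ! i"
    using i unfolding m1 vadd_nth[OF _ ] by (simp add: m2 m3 e odd_card_symd[OF f])
qed simp

lemma GA_aff:
  assumes "g \<in> GA s" shows "aff s g"
proof -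
  obtain a M where g: "g = restrict (\<lambda>b. vadd a (matvec s M b)) (vecs s)" and a: "a \<in> vecs s"
    and bM: "bij_betw (matvec s M) (vecs s) (vecs s)"
    using assms unfolding GA_def by blast
  have ge: "g b = vadd a (matvec s M b)" if "b \<in> vecs s" for b using that g by simp
  have b1: "bij_betw (\<lambda>b. vadd (matvec s M b) a) (vecs s) (vecs s)"
    using bij_betw_trans[OF bM bij_vadd_const[of a s]] a by (simp add: comp_def)
  have "bij_betw g (vecs s) (vecs s) = bij_betw (\<lambda>b. vadd (matvec s M b) a) (vecs s) (vecs s)"
    by (rule bij_betw_cong) (simp add: ge vadd_comm)
  then have b2: "bij_betw g (vecs s) (vecs s)" using b1 by simp
  have "g (vadd (vadd x y) z) = vadd (vadd (g x) (g y)) (g z)" if "x \<in> vecs s" "y \<in> vecs s" "z \<in> vecs s" for x y z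
  proof -
    have m: "matvec s M (vadd (vadd x y) z) = vadd (vadd (matvec s M x) (matvec s M y)) (matvec s M z)"
      using matvec_add that by simp
    show ?thesis using ge that m a by (intro nth_equalityI) auto
  qed
  then show ?thesis unfolding aff_def using b2 by blast
qed

lemma GAgrp_mult: "monoid.mult (GAgrp s\<lparr>carrier := G\<rparr>) = compose (vecs s)"
  by (simp add: GAgrp_def)
lemma GAgrp_mult': "monoid.mult (GAgrp s) = compose (vecs s)"
  by (simp add: GAgrp_def)
lemma GAgrp_carrier: "carrier (GAgrp s) = GA s"
  by (simp add: GAgrp_def)

lemma g_elt_prop:
  assumes reg: "regular_subgroup s G" and z: "z \<in> vecs s"
  shows "g_elt s G z \<in> G \<and> g_elt s G z (zero s) = z"
proof -
  have "\<exists>!g. g \<in> G \<and> g (zero s) = z" using reg z unfolding regular_subgroup_def by simp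
  then show ?thesis unfolding g_elt_def by (rule theI')
qed

lemma g_elt_unique:
  assumes reg: "regular_subgroup s G" and z: "z \<in> vecs s" and c: "c \<in> G" "c (zero s) = z"
  shows "g_elt s G z = c"
proof -
  have "\<exists>!g. g \<in> G \<and> g (zero s) = z" using reg z unfolding regular_subgroup_def by simp
  then show ?thesis unfolding g_elt_def by (rule the1_equality) (use c in simp)
qed

lemma induced_Rprop:
  assumes pf: "perm_fix0 s \<rho>" and ind: "induced_by_reg_aut s \<rho>"
  shows "Rprop s \<rho>"
proof -
  obtain G T where reg: "regular_subgroup s G"
    and T: "T \<in> iso (GAgrp s\<lparr>carrier := G\<rparr>) (GAgrp s\<lparr>carrier := G\<rparr>)"
    and Tg: "\<forall>a\<in>vecs s. T (g_elt s G a) = g_elt s G (\<rho> a)"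
    using ind unfolding induced_by_reg_aut_def by blast
  have sg: "subgroup G (GAgrp s)" using reg unfolding regular_subgroup_def by blast
  have GGA: "G \<subseteq> GA s" using subgroup.subset[OF sg] by (simp add: GAgrp_carrier)
  have mc: "compose (vecs s) x y \<in> G" if "x \<in> G" "y \<in> G" for x y
    using subgroup.m_closed[OF sg that] by (simp add: GAgrp_mult')
  have Thom: "T \<in> hom (GAgrp s\<lparr>carrier := G\<rparr>) (GAgrp s\<lparr>carrier := G\<rparr>)" using T unfolding iso_def by blast
  have TG: "T x \<in> G" if "x \<in> G" for x using Thom that unfolding hom_def by auto
  have Tm: "T (compose (vecs s) x y) = compose (vecs s) (T x) (T y)" if "x \<in> G" "y \<in> G" for x y
    using Thom that unfolding hom_def by (simp add: GAgrp_mult)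
  have rl: "\<And>b. length b = s \<Longrightarrow> length (\<rho> b) = s" using pf_len[OF pf] .
  show ?thesis unfolding Rprop_def
  proof (intro ballI)
    fix a a' assume aa: "a \<in> vecs s" "a' \<in> vecs s"
    obtain g where g: "g \<in> G" "g a = a'" using reg aa unfolding regular_subgroup_def by blast
    have ag: "aff s g" using GA_aff g GGA by blast
    have ah: "aff s (T g)" using GA_aff TG[OF g(1)] GGA by blast
    have "\<rho> (g z) = T g (\<rho> z)" if zv: "z \<in> vecs s" for z
    proof -
      have gz: "g_elt s G z \<in> G" "g_elt s G z (zero s) = z" using g_elt_prop[OF reg zv] by auto
      have gzv: "g z \<in> vecs s" using aff_len[OF ag] zv by simp
      have c: "compose (vecs s) g (g_elt s G z) \<in> G" using mc g(1) gz(1) .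
      have c0: "compose (vecs s) g (g_elt s G z) (zero s) = g z" using gz(2) by (simp add: compose_eq)
      have e1: "g_elt s G (g z) = compose (vecs s) g (g_elt s G z)" using g_elt_unique[OF reg gzv c c0] .
      have "g_elt s G (\<rho> (g z)) = T (g_elt s G (g z))" using Tg gzv by simp
      also have "\<dots> = compose (vecs s) (T g) (T (g_elt s G z))" unfolding e1 using Tm g(1) gz(1) by simp
      also have "\<dots> = compose (vecs s) (T g) (g_elt s G (\<rho> z))" using Tg zv by simp
      finally have e2: "g_elt s G (\<rho> (g z)) = compose (vecs s) (T g) (g_elt s G (\<rho> z))" .
      have rgz: "\<rho> (g z) \<in> vecs s" using rl gzv by simp
      have rz: "\<rho> z \<in> vecs s" using rl zv by simp
      have "\<rho> (g z) = g_elt s G (\<rho> (g z)) (zero s)" using g_elt_prop[OF reg rgz] by simp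
      also have "\<dots> = T g (g_elt s G (\<rho> z) (zero s))" unfolding e2 by (simp add: compose_eq)
      also have "\<dots> = T g (\<rho> z)" using g_elt_prop[OF reg rz] by simp
      finally show ?thesis .
    qed
    then show "\<exists>g h. aff s g \<and> aff s h \<and> g a = a' \<and> (\<forall>z\<in>vecs s. \<rho> (g z) = h (\<rho> z))"
      using ag ah g(2) by blast
  qed
qed

lemma symd_comm: "symd A B = symd B A" unfolding symd_def by blast
lemma symd_assoc: "symd (symd A B) C = symd A (symd B C)" unfolding symd_def by blast
lemma symd_cancel2[simp]: "symd (symd A B) B = A" unfolding symd_def by blast
lemma symd_self[simp]: "symd A A = {}" unfolding symd_def by blast
lemma symd_empty2[simp]: "symd A {} = A" unfolding symd_def by blast

lemma code_trans:
  assumes pf: "perm_fix0 s \<rho>" and R: "Rprop s \<rho>" and c: "c \<in> Code s \<rho>" and c': "c' \<in> Code s \<rho>"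
  shows "\<exists>x \<pi>. is_aut (positions s) (Code s \<rho>) x \<pi> \<and> symd x (\<pi> ` c) = c'"
proof -
  have cP: "c \<subseteq> positions s" and c'P: "c' \<subseteq> positions s" using Code_pos c c' by auto
  let ?a = "vsum s (Lp c)" and ?a' = "vsum s (Lp c')"
  have av: "?a \<in> vecs s" "?a' \<in> vecs s" by simp_all
  obtain g h where ag: "aff s g" and ah: "aff s h" and ga: "g ?a = ?a'" and gh: "\<forall>z\<in>vecs s. \<rho> (g z) = h (\<rho> z)"
    using R[unfolded Rprop_def, rule_format, OF av] by blast
  have zz: "\<rho> (zero s) = zero s" using pf unfolding perm_fix0_def by blast
  have rl: "\<And>b. length b = s \<Longrightarrow> length (\<rho> b) = s" using pf_len[OF pf] .
  have lg: "\<And>b. length b = s \<Longrightarrow> length (g b) = s" using aff_len[OF ag] .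
  have lh: "\<And>b. length b = s \<Longrightarrow> length (h b) = s" using aff_len[OF ah] .
  have bp: "bij_betw (pmap g h) (positions s) (positions s)" using bij_pmap ag ah unfolding aff_def by blast
  define x where "x = symd c' (pmap g h ` c)"
  have pc: "pmap g h ` c \<subseteq> positions s" using bp cP unfolding bij_betw_def by blast
  have xP: "x \<subseteq> positions s" unfolding x_def by (rule symd_sub[OF c'P pc])
  have Lc: "Lp c \<subseteq> vecs s" and Rc: "Rp c \<subseteq> vecs s" using pos_Lp[OF cP] pos_Rp[OF cP] .
  have ec: "even (card (Lp c))" "even (card (Rp c))" and sc: "vsum s (Rp c) = \<rho> ?a"
    using c unfolding Code_def by auto
  have ec': "even (card (Lp c'))" "even (card (Rp c'))" and sc': "vsum s (Rp c') = \<rho> ?a'"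
    using c' unfolding Code_def by auto
  have f1: "finite (Lp c')" "finite (g ` Lp c)" "finite (Rp c')" "finite (h ` Rp c)"
    using fin_Lp[OF c'P] fin_Lp[OF cP] fin_Rp[OF c'P] fin_Rp[OF cP] by auto
  have e1: "even (card (Lp x))" unfolding x_def Lp_symd Lp_pmap
    using odd_card_symd[OF f1(1,2)] ec ec' card_aff_image[OF ag Lc] by simp
  have e2: "even (card (Rp x))" unfolding x_def Rp_symd Rp_pmap
    using odd_card_symd[OF f1(3,4)] ec ec' card_aff_image[OF ah Rc] by simp
  have g0: "length (g (zero s)) = s" "length (h (zero s)) = s" using lg lh by simp_all
  have vL: "vsum s (Lp x) = g (zero s)"
  proof -
    have "vsum s (Lp x) = vadd ?a' (lin0 s g ?a)" unfolding x_def Lp_symd Lp_pmap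
      vsum_symd[OF f1(1,2)] vsum_aff_image_even[OF ag Lc ec(1)] ..
    also have "\<dots> = g (zero s)" unfolding lin0_def ga using g0 by simp
    finally show ?thesis .
  qed
  have ha: "h (\<rho> ?a) = \<rho> ?a'" using gh av ga by metis
  have vR: "vsum s (Rp x) = h (zero s)"
  proof -
    have "vsum s (Rp x) = vadd (\<rho> ?a') (lin0 s h (\<rho> ?a))" unfolding x_def Rp_symd Rp_pmap
      vsum_symd[OF f1(3,4)] vsum_aff_image_even[OF ah Rc ec(2)] sc' sc ..
    also have "\<dots> = h (zero s)" unfolding lin0_def ha using g0 rl by simp
    finally show ?thesis .
  qed
  have "\<rho> (g (zero s)) = h (zero s)" using gh zz by (metis in_vecs zero_len)
  then have xC: "x \<in> Code s \<rho>" unfolding Code_def using xP e1 e2 vL vR by simp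
  have cond: "\<forall>b\<in>vecs s. \<rho> (vadd (vsum s (Lp x)) (lin0 s g b)) = vadd (vsum s (Rp x)) (lin0 s h (\<rho> b))"
  proof
    fix b assume b: "b \<in> vecs s"
    have l: "length (g b) = s" "length (h (\<rho> b)) = s" using lg lh rl b by auto
    have "vadd (g (zero s)) (lin0 s g b) = g b" unfolding lin0_def using l g0 by (intro nth_equalityI) auto
    moreover have "vadd (h (zero s)) (lin0 s h (\<rho> b)) = h (\<rho> b)" unfolding lin0_def using l g0 by (intro nth_equalityI) auto
    ultimately show "\<rho> (vadd (vsum s (Lp x)) (lin0 s g b)) = vadd (vsum s (Rp x)) (lin0 s h (\<rho> b))"
      unfolding vL vR using gh b by simp
  qed
  have "(\<lambda>w. symd x (pmap g h ` w)) ` Code s \<rho> = Code s \<rho>" by (rule code_pmap[OF pf ag ah xC cond])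
  then have "is_aut (positions s) (Code s \<rho>) x (pmap g h)" unfolding is_aut_def using xP bp by blast
  moreover have "symd x (pmap g h ` c) = c'" unfolding x_def by simp
  ultimately show ?thesis by blast
qed

lemma aut_comp:
  assumes a1: "is_aut N C x1 p1" and a2: "is_aut N C x2 p2" and CN: "\<forall>w\<in>C. w \<subseteq> N"
  shows "is_aut N C (symd x2 (p2 ` x1)) (p2 \<circ> p1)"
    and "\<And>w. w \<subseteq> N \<Longrightarrow> symd (symd x2 (p2 ` x1)) ((p2 \<circ> p1) ` w) = symd x2 (p2 ` symd x1 (p1 ` w))"
proof -
  have x1: "x1 \<subseteq> N" and b1: "bij_betw p1 N N" and i1: "(\<lambda>y. symd x1 (p1 ` y)) ` C = C"
    using a1 unfolding is_aut_def by auto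
  have x2: "x2 \<subseteq> N" and b2: "bij_betw p2 N N" and i2: "(\<lambda>y. symd x2 (p2 ` y)) ` C = C"
    using a2 unfolding is_aut_def by auto
  have inj2: "inj_on p2 N" using b2 unfolding bij_betw_def by blast
  have F: "symd (symd x2 (p2 ` x1)) ((p2 \<circ> p1) ` w) = symd x2 (p2 ` symd x1 (p1 ` w))" if w: "w \<subseteq> N" for w
  proof -
    have "p1 ` w \<subseteq> N" using b1 w unfolding bij_betw_def by blast
    then have "p2 ` symd x1 (p1 ` w) = symd (p2 ` x1) (p2 ` p1 ` w)" using image_symd[OF inj2 x1] by blast
    then show ?thesis by (simp add: symd_assoc image_comp)
  qed
  then show "\<And>w. w \<subseteq> N \<Longrightarrow> symd (symd x2 (p2 ` x1)) ((p2 \<circ> p1) ` w) = symd x2 (p2 ` symd x1 (p1 ` w))" .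
  have xs: "symd x2 (p2 ` x1) \<subseteq> N" using x1 x2 b2 unfolding bij_betw_def symd_def by blast
  have bc: "bij_betw (p2 \<circ> p1) N N" using bij_betw_trans[OF b1 b2] .
  have "(\<lambda>y. symd (symd x2 (p2 ` x1)) ((p2 \<circ> p1) ` y)) ` C = (\<lambda>y. symd x2 (p2 ` y)) ` ((\<lambda>y. symd x1 (p1 ` y)) ` C)"
    unfolding image_image using F CN by (intro image_cong) auto
  also have "\<dots> = C" using i1 i2 by simp
  finally show "is_aut N C (symd x2 (p2 ` x1)) (p2 \<circ> p1)" unfolding is_aut_def using xs bc by blast
qed

lemma neighbor_trans:
  assumes pf: "perm_fix0 s \<rho>" and R: "Rprop s \<rho>" and ct: "coord_transitive (positions s) (Code s \<rho>)"
  shows "neighbor_transitive (positions s) (Code s \<rho>)"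
  unfolding neighbor_transitive_def
proof (intro conjI ballI)
  fix c c' assume "c \<in> Code s \<rho>" "c' \<in> Code s \<rho>"
  then show "\<exists>x \<pi>. is_aut (positions s) (Code s \<rho>) x \<pi> \<and> symd x (\<pi> ` c) = c'"
    using code_trans[OF pf R] by blast
next
  let ?N = "positions s" and ?C = "Code s \<rho>"
  have CN: "\<forall>w\<in>?C. w \<subseteq> ?N" using Code_pos by blast
  fix y y' assume y: "y \<in> neighbors ?N ?C" and y': "y' \<in> neighbors ?N ?C"
  obtain c where yN: "y \<subseteq> ?N" and c: "c \<in> ?C" and cy: "card (symd y c) = 1"
    using y unfolding neighbors_def by blast
  obtain c' where y'N: "y' \<subseteq> ?N" and c': "c' \<in> ?C" and cy': "card (symd y' c') = 1"
    using y' unfolding neighbors_def by blast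
  obtain p where p: "symd y c = {p}" using cy card_1_singletonE by blast
  obtain p' where p': "symd y' c' = {p'}" using cy' card_1_singletonE by blast
  have cP: "c \<subseteq> ?N" "c' \<subseteq> ?N" using CN c c' by auto
  have pN: "p \<in> ?N" using p yN cP unfolding symd_def by blast
  have p'N: "p' \<in> ?N" using p' y'N cP unfolding symd_def by blast
  have ye: "y = symd c {p}" using p symd_cancel2[of y c] by (simp add: symd_comm)
  have ye': "y' = symd c' {p'}" using p' symd_cancel2[of y' c'] by (simp add: symd_comm)
  have e0: "{} \<in> ?C" using empty_Code[OF pf] .
  obtain x1 p1 where a1: "is_aut ?N ?C x1 p1" and m1: "symd x1 (p1 ` c) = {}"
    using code_trans[OF pf R c e0] by blast
  obtain x3 p3 where a3: "is_aut ?N ?C x3 p3" and m3: "symd x3 (p3 ` {}) = c'"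
    using code_trans[OF pf R e0 c'] by blast
  have x3: "x3 = c'" using m3 by simp
  have b1: "bij_betw p1 ?N ?N" and b3: "bij_betw p3 ?N ?N" using a1 a3 unfolding is_aut_def by auto
  have x1N: "x1 \<subseteq> ?N" using a1 unfolding is_aut_def by auto
  let ?q = "inv_into ?N p3 p'"
  have qN: "?q \<in> ?N" using b3 p'N by (metis bij_betw_def inv_into_into)
  have p3q: "p3 ?q = p'" using b3 p'N by (metis bij_betw_def f_inv_into_f)
  have p1p: "p1 p \<in> ?N" using b1 pN unfolding bij_betw_def by blast
  obtain \<sigma> where bs: "bij_betw \<sigma> ?N ?N" and isg: "(\<lambda>w. \<sigma> ` w) ` ?C = ?C" and sq: "\<sigma> (p1 p) = ?q"
    using ct p1p qN unfolding coord_transitive_def by blast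
  have a2: "is_aut ?N ?C {} \<sigma>" unfolding is_aut_def using bs isg by simp
  have a12: "is_aut ?N ?C (symd {} (\<sigma> ` x1)) (\<sigma> \<circ> p1)" using aut_comp(1)[OF a1 a2 CN] .
  have a123: "is_aut ?N ?C (symd x3 (p3 ` symd {} (\<sigma> ` x1))) (p3 \<circ> (\<sigma> \<circ> p1))"
    using aut_comp(1)[OF a12 a3 CN] .
  have inj1: "inj_on p1 ?N" using b1 unfolding bij_betw_def by blast
  have F1: "symd x1 (p1 ` y) = {p1 p}"
  proof -
    have "p1 ` y = symd (p1 ` c) {p1 p}" unfolding ye using image_symd[OF inj1 cP(1)] pN by simp
    then have "symd x1 (p1 ` y) = symd (symd x1 (p1 ` c)) {p1 p}" by (simp add: symd_assoc)
    then show ?thesis using m1 by simp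
  qed
  have "symd (symd x3 (p3 ` symd {} (\<sigma> ` x1))) ((p3 \<circ> (\<sigma> \<circ> p1)) ` y)
      = symd x3 (p3 ` symd (symd {} (\<sigma> ` x1)) ((\<sigma> \<circ> p1) ` y))"
    using aut_comp(2)[OF a12 a3 CN yN] .
  also have "symd (symd {} (\<sigma> ` x1)) ((\<sigma> \<circ> p1) ` y) = symd {} (\<sigma> ` symd x1 (p1 ` y))"
    using aut_comp(2)[OF a1 a2 CN yN] .
  also have "\<dots> = {?q}" using F1 sq by simp
  also have "symd x3 (p3 ` {?q}) = y'" using x3 p3q ye' by simp
  finally show "\<exists>x \<pi>. is_aut ?N ?C x \<pi> \<and> symd x (\<pi> ` y) = y'" using a123 by blast
qed

theorem theorem6:
  fixes \<tau> \<tau>' :: "bool list \<Rightarrow> bool list" and r r' :: nat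
  assumes "r \<ge> 1" and "r' \<ge> 1"
    and "perm_fix0 r \<tau>" and "perm_fix0 r' \<tau>'"
  shows "(point_transitive (positions r) (SQS_blocks r \<tau>) \<and>
          point_transitive (positions r') (SQS_blocks r' \<tau>') \<longrightarrow>
          point_transitive (positions (r + r')) (SQS_blocks (r + r') (cat_perm r \<tau> \<tau>')))
       \<and> (coord_transitive (positions r) (Scode r \<tau>) \<and>
          coord_transitive (positions r') (Scode r' \<tau>') \<longrightarrow>
          coord_transitive (positions (r + r')) (Scode (r + r') (cat_perm r \<tau> \<tau>')))
       \<and> (induced_by_reg_aut r \<tau> \<and> induced_by_reg_aut r' \<tau>' \<and>
          coord_transitive (positions r) (Scode r \<tau>) \<and>
          coord_transitive (positions r') (Scode r' \<tau>') \<longrightarrow>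
          neighbor_transitive (positions (r + r')) (Scode (r + r') (cat_perm r \<tau> \<tau>')))"
proof -
  have pf: "perm_fix0 r \<tau>" and pf': "perm_fix0 r' \<tau>'" using assms by auto
  have pfc: "perm_fix0 (r + r') (cat_perm r \<tau> \<tau>')" using pf_cat[OF pf pf'] .
  have P1: "point_transitive (positions (r + r')) (SQS_blocks (r + r') (cat_perm r \<tau> \<tau>'))"
    if "point_transitive (positions r) (SQS_blocks r \<tau>)" "point_transitive (positions r') (SQS_blocks r' \<tau>')"
    using T_point[OF pfc Kp_cat[OF pf pf' K1[OF pf that(1)] K1[OF pf' that(2)]]] .
  have P2: "coord_transitive (positions (r + r')) (Scode (r + r') (cat_perm r \<tau> \<tau>'))"
    if "coord_transitive (positions r) (Scode r \<tau>)" "coord_transitive (positions r') (Scode r' \<tau>')"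
    using T_coord[OF pfc Kp_cat[OF pf pf' K1[OF pf coord_point[OF pf that(1)]] K1[OF pf' coord_point[OF pf' that(2)]]]] .
  have P3: "neighbor_transitive (positions (r + r')) (Scode (r + r') (cat_perm r \<tau> \<tau>'))"
    if "induced_by_reg_aut r \<tau>" "induced_by_reg_aut r' \<tau>'"
       "coord_transitive (positions r) (Scode r \<tau>)" "coord_transitive (positions r') (Scode r' \<tau>')"
  proof -
    have R: "Rprop (r + r') (cat_perm r \<tau> \<tau>')"
      using Rprop_cat[OF pf pf' induced_Rprop[OF pf that(1)] induced_Rprop[OF pf' that(2)]] .
    have ct: "coord_transitive (positions (r + r')) (Code (r + r') (cat_perm r \<tau> \<tau>'))"
      using P2[OF that(3) that(4)] unfolding pf_Scode[OF pfc] .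
    show ?thesis unfolding pf_Scode[OF pfc] using neighbor_trans[OF pfc R ct] .
  qed
  show ?thesis using P1 P2 P3 by blast
qed

end
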